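(* Let $W(D_4)$ be the group of real $4\times 4$ matrices of the form $D\cdot P(\pi)$, where $D=\mathrm{diag}(\varepsilon_1,\varepsilon_2,\varepsilon_3,\varepsilon_4)$ with $\varepsilon_i\in\{\pm1\}$ and $\varepsilon_1\varepsilon_2\varepsilon_3\varepsilon_4=1$, and $P(\pi)$ is the permutation matrix of $\pi\in\mathfrak S_4$. Then $$\mathrm{Aut}\big(W(D_4)\big)/\mathrm{Int}\big(W(D_4)\big)\simeq \mathfrak S_3\times \mathbb Z/2\mathbb Z,$$ where $\mathrm{Int}(W(D_4))$ is the group of inner automorphisms.
   Context: $W(D_4)\cong\mathfrak S_2^3\rtimes\mathfrak S_4$ is the Weyl group of type $D_4$. The $\mathbb Z/2\mathbb Z$ factor is generated by the class of the automorphism $\psi\colon x\mapsto x\cdot\det(x)$ (i.e. $D\cdot P(\pi)\mapsto D\cdot P(\pi)\cdot(-1)^{\mathrm{sgn}(\pi)}$ as a scalar sign). *)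

theory Defs
  imports "HOL-Analysis.Analysis" "HOL-Algebra.Algebra"
begin

text \<open>Permutation matrix of a permutation of the index type 4.\<close>
definition perm_mat :: "(4 \<Rightarrow> 4) \<Rightarrow> real^4^4" where
  "perm_mat \<pi> = (\<chi> i j. if i = \<pi> j then 1 else 0)"

text \<open>Diagonal matrix with diagonal entries e.\<close>
definition diag_mat :: "(4 \<Rightarrow> real) \<Rightarrow> real^4^4" where
  "diag_mat e = (\<chi> i j. if i = j then e i else 0)"

text \<open>The Weyl group W(D4): matrices D * P(pi), D = diag(eps) with eps_i = +-1,
  product of the eps_i equal to 1, pi in S4.\<close>
definition W_D4 :: "(real^4^4) monoid" where
  "W_D4 = \<lparr> carrier = {diag_mat e ** perm_mat \<pi> | e \<pi>.
                         (\<forall>i. e i \<in> {1, -1}) \<and> (\<Prod>i\<in>UNIV. e i) = 1 \<and> \<pi> permutes (UNIV :: 4 set)},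
           mult = (**),
           one = mat 1 \<rparr>"

text \<open>Inner automorphisms of a group (as extensional functions, matching AutoGroup).\<close>
definition Inn :: "('a, 'b) monoid_scheme \<Rightarrow> ('a \<Rightarrow> 'a) set" where
  "Inn G = {(\<lambda>x \<in> carrier G. g \<otimes>\<^bsub>G\<^esub> x \<otimes>\<^bsub>G\<^esub> inv\<^bsub>G\<^esub> g) | g. g \<in> carrier G}"

end

theory Submission
  imports Defs "HOL-Combinatorics.Transposition"
begin

(* ---- a/A.thy ---- *)


type_synonym el = "int list \<times> nat list"

definition pos :: "4 \<Rightarrow> nat" where
  "pos i = (if i = 1 then 0 else if i = 2 then 1 else if i = 3 then 2 else 3)"
definition idx :: "nat \<Rightarrow> 4" where
  "idx k = (if k = 0 then 1 else if k = 1 then 2 else if k = 2 then 3 else 4)"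

lemma four_cases: "(k::nat) < 4 \<Longrightarrow> k = 0 \<or> k = 1 \<or> k = 2 \<or> k = 3" by auto

lemma pos_lt [simp]: "pos i < 4" by (simp add: pos_def)
lemma idx_pos [simp]: "idx (pos i) = i"
  using exhaust_4[of i] by (auto simp: pos_def idx_def)
lemma pos_idx [simp]: "k < 4 \<Longrightarrow> pos (idx k) = k"
  using four_cases[of k] by (auto simp: pos_def idx_def)
lemma pos_eq_iff [simp]: "pos i = pos j \<longleftrightarrow> i = j"
  by (metis idx_pos)

definition dec :: "el \<Rightarrow> real^4^4" where
  "dec x = (\<chi> i j. if pos i = snd x ! pos j then real_of_int (fst x ! pos j) else 0)"

definition lmul :: "el \<Rightarrow> el \<Rightarrow> el" where
  "lmul x y = (map (\<lambda>c. fst y ! c * fst x ! (snd y ! c)) [0..<4], map (\<lambda>c. snd x ! (snd y ! c)) [0..<4])"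

definition ok :: "el \<Rightarrow> bool" where
  "ok x \<longleftrightarrow> length (fst x) = 4 \<and> length (snd x) = 4 \<and> (\<forall>k\<in>set (snd x). k < 4) \<and> (\<forall>a\<in>set (fst x). a = 1 \<or> a = -1)"

lemma dec_entry: "dec x $ i $ j = (if pos i = snd x ! pos j then real_of_int (fst x ! pos j) else 0)"
  by (simp add: dec_def)

lemma ok_snd_lt: "ok x \<Longrightarrow> c < 4 \<Longrightarrow> snd x ! c < 4"
  by (auto simp: ok_def)
lemma ok_fst: "ok x \<Longrightarrow> c < 4 \<Longrightarrow> fst x ! c = 1 \<or> fst x ! c = -1"
  by (auto simp: ok_def)

lemma dec_mult:
  assumes x: "ok x" and y: "ok y"
  shows "dec x ** dec y = dec (lmul x y)"
proof -
  have "(dec x ** dec y) $ i $ j = dec (lmul x y) $ i $ j" for i j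
  proof -
    define c where "c = pos j"
    have c4: "c < 4" by (simp add: c_def)
    define kk where "kk = snd y ! c"
    have kk4: "kk < 4" using ok_snd_lt[OF y c4] by (simp add: kk_def)
    have "(dec x ** dec y) $ i $ j = (\<Sum>k\<in>UNIV. dec x $ i $ k * dec y $ k $ j)"
      by (simp add: matrix_matrix_mult_def)
    also have "\<dots> = (\<Sum>k\<in>UNIV. dec x $ i $ k * (if k = idx kk then real_of_int (fst y ! c) else 0))"
    proof (rule sum.cong[OF refl])
      fix k
      have "pos k = kk \<longleftrightarrow> k = idx kk" using kk4 by (metis idx_pos pos_idx)
      then show "dec x $ i $ k * dec y $ k $ j = dec x $ i $ k * (if k = idx kk then real_of_int (fst y ! c) else 0)"
        by (simp add: dec_entry c_def kk_def)
    qed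
    also have "\<dots> = dec x $ i $ idx kk * real_of_int (fst y ! c)"
      by (simp add: if_distrib cong: if_cong)
    also have "\<dots> = dec (lmul x y) $ i $ j"
      using kk4 c4 by (simp add: dec_entry lmul_def c_def[symmetric] kk_def[symmetric] mult.commute)
    finally show ?thesis .
  qed
  then show ?thesis by (simp add: vec_eq_iff)
qed

lemma dec_inj:
  assumes x: "ok x" and y: "ok y" and e: "dec x = dec y"
  shows "x = y"
proof -
  have *: "snd x ! c = snd y ! c \<and> fst x ! c = fst y ! c" if c4: "c < 4" for c
  proof -
    have a: "dec x $ idx (snd x ! c) $ idx c = dec y $ idx (snd x ! c) $ idx c" using e by simp
    have "fst x ! c \<noteq> 0" using ok_fst[OF x c4] by auto
    then have "snd x ! c = snd y ! c" using a ok_snd_lt[OF x c4] c4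
      by (auto simp: dec_entry split: if_splits)
    with a show ?thesis using ok_snd_lt[OF x c4] c4 by (simp add: dec_entry)
  qed
  have l: "length (fst x) = 4" "length (fst y) = 4" "length (snd x) = 4" "length (snd y) = 4"
    using x y by (auto simp: ok_def)
  have "fst x = fst y" by (rule nth_equalityI) (use l * in auto)
  moreover have "snd x = snd y" by (rule nth_equalityI) (use l * in auto)
  ultimately show ?thesis by (simp add: prod_eq_iff)
qed

lemma lmul_ok:
  assumes x: "ok x" and y: "ok y" shows "ok (lmul x y)"
proof -
  have "\<forall>k\<in>set (snd (lmul x y)). k < 4"
    using ok_snd_lt[OF x] ok_snd_lt[OF y] by (auto simp: lmul_def)
  moreover have "\<forall>a\<in>set (fst (lmul x y)). a = 1 \<or> a = -1"
  proof
    fix a assume "a \<in> set (fst (lmul x y))"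
    then obtain c where c: "c < 4" "a = fst y ! c * fst x ! (snd y ! c)" by (auto simp: lmul_def)
    have "fst y ! c = 1 \<or> fst y ! c = -1" by (rule ok_fst[OF y c(1)])
    moreover have "fst x ! (snd y ! c) = 1 \<or> fst x ! (snd y ! c) = -1"
      by (rule ok_fst[OF x ok_snd_lt[OF y c(1)]])
    ultimately show "a = 1 \<or> a = -1" using c(2) by auto
  qed
  ultimately show ?thesis by (simp add: ok_def lmul_def)
qed


section \<open>The matrix group\<close>

definition DP :: "(4 \<Rightarrow> real) \<Rightarrow> (4 \<Rightarrow> 4) \<Rightarrow> real^4^4" where
  "DP e p = diag_mat e ** perm_mat p"

definition valid :: "(4 \<Rightarrow> real) \<Rightarrow> (4 \<Rightarrow> 4) \<Rightarrow> bool" where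
  "valid e p \<longleftrightarrow> (\<forall>i. e i \<in> {1, -1}) \<and> (\<Prod>i\<in>UNIV. e i) = 1 \<and> p permutes (UNIV :: 4 set)"

lemma carrier_W: "carrier W_D4 = {DP e p | e p. valid e p}"
  by (auto simp: W_D4_def DP_def valid_def)

lemma mult_W [simp]: "mult W_D4 = (**)" by (simp add: W_D4_def)
lemma one_W [simp]: "one W_D4 = mat 1" by (simp add: W_D4_def)

lemma DP_entry: "DP e p $ i $ j = (if i = p j then e i else 0)"
proof -
  have "DP e p $ i $ j = (\<Sum>k\<in>UNIV. (if i = k then e i else 0) * (if k = p j then 1 else 0))"
    by (simp add: DP_def matrix_matrix_mult_def diag_mat_def perm_mat_def)
  also have "\<dots> = (\<Sum>k\<in>UNIV. if k = i then (if i = p j then e i else 0) else 0)"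
    by (rule sum.cong) auto
  also have "\<dots> = (if i = p j then e i else 0)" by simp
  finally show ?thesis .
qed

lemma DP_mult:
  assumes p: "p permutes (UNIV :: 4 set)"
  shows "DP e p ** DP f q = DP (\<lambda>i. e i * f (Hilbert_Choice.inv p i)) (p \<circ> q)"
proof -
  have "(DP e p ** DP f q) $ i $ j = DP (\<lambda>i. e i * f (Hilbert_Choice.inv p i)) (p \<circ> q) $ i $ j" for i j
  proof -
    have "(DP e p ** DP f q) $ i $ j = (\<Sum>k\<in>UNIV. (if i = p k then e i else 0) * (if k = q j then f k else 0))"
      by (simp add: matrix_matrix_mult_def DP_entry)
    also have "\<dots> = (\<Sum>k\<in>UNIV. (if k = q j then (if i = p k then e i else 0) * f k else 0))"
      by (rule sum.cong) auto
    also have "\<dots> = (if i = p (q j) then e i * f (q j) else 0)" by simp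
    also have "\<dots> = DP (\<lambda>i. e i * f (Hilbert_Choice.inv p i)) (p \<circ> q) $ i $ j"
      by (auto simp: DP_entry permutes_inverses[OF p])
    finally show ?thesis .
  qed
  then show ?thesis by (simp add: vec_eq_iff)
qed

lemma prod_inv_perm:
  assumes p: "p permutes (UNIV :: 4 set)"
  shows "(\<Prod>i\<in>UNIV. f (Hilbert_Choice.inv p i)) = (\<Prod>i\<in>UNIV. (f i :: real))"
  using prod.permute[OF permutes_inv[OF p], of f] by (simp add: o_def)

lemma valid_mult:
  assumes "valid e p" "valid f q"
  shows "valid (\<lambda>i. e i * f (Hilbert_Choice.inv p i)) (p \<circ> q)"
proof -
  have p: "p permutes UNIV" using assms by (simp add: valid_def)
  have "(\<Prod>i\<in>UNIV. e i * f (Hilbert_Choice.inv p i)) = (\<Prod>i\<in>UNIV. e i) * (\<Prod>i\<in>UNIV. f (Hilbert_Choice.inv p i))"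
    by (simp add: prod.distrib)
  also have "\<dots> = 1" using assms prod_inv_perm[OF p, of f] by (simp add: valid_def)
  moreover have "e i * f (Hilbert_Choice.inv p i) \<in> {1, -1}" for i
  proof -
    have "e i = 1 \<or> e i = -1" "f (Hilbert_Choice.inv p i) = 1 \<or> f (Hilbert_Choice.inv p i) = -1"
      using assms by (auto simp: valid_def)
    then show ?thesis by auto
  qed
  ultimately show ?thesis using assms by (auto simp: valid_def permutes_compose)
qed

lemma DP_one: "DP (\<lambda>_. 1) id = mat 1"
  by (simp add: vec_eq_iff DP_entry mat_def)

lemma valid_one: "valid (\<lambda>_. 1) id" by (simp add: valid_def)

lemma DP_linv:
  assumes "valid e p"
  shows "DP (\<lambda>i. e (p i)) (Hilbert_Choice.inv p) ** DP e p = mat 1" "valid (\<lambda>i. e (p i)) (Hilbert_Choice.inv p)"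
proof -
  have p: "p permutes UNIV" using assms by (simp add: valid_def)
  have ip: "Hilbert_Choice.inv p permutes UNIV" by (rule permutes_inv[OF p])
  have e2: "e i * e i = 1" for i
  proof -
    have "e i = 1 \<or> e i = -1" using assms by (auto simp: valid_def)
    then show ?thesis by auto
  qed
  have "DP (\<lambda>i. e (p i)) (Hilbert_Choice.inv p) ** DP e p = DP (\<lambda>i. e (p i) * e (Hilbert_Choice.inv (Hilbert_Choice.inv p) i)) (Hilbert_Choice.inv p \<circ> p)"
    by (rule DP_mult[OF ip])
  also have "\<dots> = DP (\<lambda>_. 1) id"
    using permutes_inv_inv[OF p] permutes_inv_o(2)[OF p] e2 by simp
  finally show "DP (\<lambda>i. e (p i)) (Hilbert_Choice.inv p) ** DP e p = mat 1" by (simp add: DP_one)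
  have "(\<Prod>i\<in>UNIV. e (p i)) = (\<Prod>i\<in>UNIV. e i)"
    using prod.permute[OF p, of e] by (simp add: o_def)
  then show "valid (\<lambda>i. e (p i)) (Hilbert_Choice.inv p)" using assms ip by (auto simp: valid_def)
qed

lemma group_W: "group W_D4"
proof (rule groupI)
  fix x y assume "x \<in> carrier W_D4" "y \<in> carrier W_D4"
  then obtain e p f q where "x = DP e p" "valid e p" "y = DP f q" "valid f q" by (auto simp: carrier_W)
  then show "x \<otimes>\<^bsub>W_D4\<^esub> y \<in> carrier W_D4"
  proof -
    have p: "p permutes UNIV" using \<open>valid e p\<close> by (simp add: valid_def)
    show ?thesis unfolding carrier_W mult_W \<open>x = DP e p\<close> \<open>y = DP f q\<close> DP_mult[OF p]
      using valid_mult[OF \<open>valid e p\<close> \<open>valid f q\<close>] by blast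
  qed
next
  show "\<one>\<^bsub>W_D4\<^esub> \<in> carrier W_D4"
    unfolding carrier_W one_W using DP_one[symmetric] valid_one by blast
next
  fix x y z show "x \<otimes>\<^bsub>W_D4\<^esub> y \<otimes>\<^bsub>W_D4\<^esub> z = x \<otimes>\<^bsub>W_D4\<^esub> (y \<otimes>\<^bsub>W_D4\<^esub> z)"
    by (simp add: matrix_mul_assoc)
next
  fix x show "\<one>\<^bsub>W_D4\<^esub> \<otimes>\<^bsub>W_D4\<^esub> x = x" by simp
next
  fix x assume "x \<in> carrier W_D4"
  then obtain e p where "x = DP e p" "valid e p" by (auto simp: carrier_W)
  then show "\<exists>y\<in>carrier W_D4. y \<otimes>\<^bsub>W_D4\<^esub> x = \<one>\<^bsub>W_D4\<^esub>"
    unfolding carrier_W mult_W one_W using DP_linv[of e p] by blast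
qed


(* ---- a/B.thy ---- *)


definition P24 :: "nat list list" where "P24 = filter distinct (List.n_lists 4 [0,1,2,3])"
definition S8 :: "int list list" where "S8 = filter (\<lambda>s. prod_list s = 1) (List.n_lists 4 [1,-1])"
definition L :: "el list" where "L = concat (map (\<lambda>p. map (\<lambda>s. (s,p)) S8) P24)"
definition I :: el where "I = ([1,1,1,1],[0,1,2,3])"
definition M :: el where "M = ([-1,-1,-1,-1],[0,1,2,3])"
definition G :: "el list" where
  "G = [([1,1,1,1],[1,0,2,3]), ([1,1,1,1],[0,2,1,3]), ([1,1,1,1],[0,1,3,2]), ([1,1,-1,-1],[0,1,3,2])]"
definition gm :: "nat \<Rightarrow> real^4^4" where "gm i = dec (G ! i)"
definition wordval :: "nat list \<Rightarrow> el" where "wordval ws = foldl (\<lambda>x i. lmul x (G ! i)) I ws"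
definition WORDS :: "nat list list" where "WORDS = [[0, 1, 0, 2, 1, 0], [0, 3, 1, 0, 2, 1], [1, 0, 3, 1, 0, 2], [2, 1, 0, 3, 1, 2], [0, 1, 0, 3, 1, 0], [0, 2, 1, 0, 3, 1], [1, 0, 2, 1, 0, 3], [3, 1, 0, 2, 1, 3], [0, 1, 0, 2, 1], [0, 2, 3, 1, 0, 2, 1], [2, 1, 0, 3, 1, 0, 2], [1, 0, 3, 1, 2], [0, 2, 1, 0, 3, 1, 0], [0, 1, 0, 3, 1], [1, 0, 2, 1, 3], [2, 3, 1, 0, 2, 1, 3], [0, 1, 2, 1, 0], [1, 0, 3, 1, 0, 2, 1], [0, 3, 1, 0, 2], [1, 2, 1, 0, 3, 1, 2], [0, 1, 3, 1, 0], [1, 0, 2, 1, 0, 3, 1], [0, 2, 1, 0, 3], [1, 3, 1, 0, 2, 1, 3], [0, 1, 2, 1], [1, 0, 2, 3, 1, 0, 2, 1], [1, 2, 1, 0, 3, 1, 0, 2], [0, 3, 1, 2], [1, 0, 2, 1, 0, 3, 1, 0], [0, 1, 3, 1], [0, 2, 1, 3], [1, 2, 3, 1, 0, 2, 1, 3], [0, 1, 0, 2], [2, 1, 0, 3, 1, 0, 2, 1], [0, 2, 3, 1, 0, 2], [1, 0, 2, 3, 1, 2], [0, 2, 1, 3, 1, 0], [1, 0, 2, 1, 3, 1], [0, 1, 0, 3], [2, 1, 3, 1, 0, 2, 1, 3], [0, 1, 2], [1, 2, 1, 0, 3, 1, 0, 2, 1], [1, 0, 2, 3, 1, 0, 2],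 [0, 2, 3, 1, 2], [1, 0, 2, 1, 3, 1, 0], [0, 2, 1, 3, 1], [0, 1, 3], [1, 2, 1, 3, 1, 0, 2, 1, 3], [1, 0, 2, 1, 0], [3, 1, 0, 2, 1], [0, 1, 0, 3, 1, 0, 2], [0, 2, 1, 0, 3, 1, 2], [1, 0, 3, 1, 0], [2, 1, 0, 3, 1], [0, 1, 0, 2, 1, 0, 3], [0, 3, 1, 0, 2, 1, 3], [1, 0, 2, 1], [2, 3, 1, 0, 2, 1], [0, 2, 1, 0, 3, 1, 0, 2], [0, 1, 0, 3, 1, 2], [2, 1, 0, 3, 1, 0], [1, 0, 3, 1], [0, 1, 0, 2, 1, 3], [0, 2, 3, 1, 0, 2, 1, 3], [1, 2, 1, 0], [0, 1, 0, 3, 1, 0, 2, 1], [3, 1, 0, 2], [0, 1, 2, 1, 0, 3, 1, 2], [1, 3, 1, 0], [0, 1, 0, 2, 1, 0, 3, 1], [2, 1, 0, 3], [0, 1, 3, 1, 0, 2, 1, 3], [1, 2, 1], [0, 1, 0, 2, 3, 1, 0, 2, 1], [0, 1, 2, 1, 0, 3, 1, 0, 2], [3, 1, 2], [0, 1, 0, 2, 1, 0, 3, 1, 0], [1, 3, 1], [2, 1, 3], [0, 1, 2, 3, 1, 0, 2, 1, 3], [1, 0, 2], [0, 2, 1, 0, 3, 1, 0, 2, 1], [2, 3, 1, 0, 2], [0, 1, 0, 2, 3, 1, 2], [2, 1, 3, 1, 0], [0, 1, 0, 2, 1, 3, 1], [1, 0, 3], [0, 2, 1, 3, 1, 0, 2,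 1, 3], [1, 2], [0, 1, 2, 1, 0, 3, 1, 0, 2, 1], [0, 1, 0, 2, 3, 1, 0, 2], [2, 3, 1, 2], [0, 1, 0, 2, 1, 3, 1, 0], [2, 1, 3, 1], [1, 3], [0, 1, 2, 1, 3, 1, 0, 2, 1, 3], [0, 2, 1, 0], [1, 3, 1, 0, 2, 1], [0, 1, 3, 1, 0, 2], [1, 0, 2, 1, 0, 3, 1, 2], [0, 3, 1, 0], [1, 2, 1, 0, 3, 1], [0, 1, 2, 1, 0, 3], [1, 0, 3, 1, 0, 2, 1, 3], [0, 2, 1], [1, 2, 3, 1, 0, 2, 1], [1, 0, 2, 1, 0, 3, 1, 0, 2], [0, 1, 3, 1, 2], [1, 2, 1, 0, 3, 1, 0], [0, 3, 1], [0, 1, 2, 1, 3], [1, 0, 2, 3, 1, 0, 2, 1, 3], [2, 1, 0], [0, 1, 3, 1, 0, 2, 1], [1, 3, 1, 0, 2], [0, 1, 0, 2, 1, 0, 3, 1, 2], [3, 1, 0], [0, 1, 2, 1, 0, 3, 1], [1, 2, 1, 0, 3], [0, 1, 0, 3, 1, 0, 2, 1, 3], [2, 1], [0, 1, 2, 3, 1, 0, 2, 1], [0, 1, 0, 2, 1, 0, 3, 1, 0, 2], [1, 3, 1, 2], [0, 1, 2, 1, 0, 3, 1, 0], [3, 1], [1, 2, 1, 3], [0, 1, 0, 2, 3, 1, 0, 2, 1, 3], [0, 2], [1, 0, 2, 1, 0, 3, 1, 0, 2, 1], [1, 2, 3, 1, 0, 2], [0, 1, 2, 3, 1, 2], [1,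 2, 1, 3, 1, 0], [0, 1, 2, 1, 3, 1], [0, 3], [1, 0, 2, 1, 3, 1, 0, 2, 1, 3], [2], [0, 1, 0, 2, 1, 0, 3, 1, 0, 2, 1], [0, 1, 2, 3, 1, 0, 2], [1, 2, 3, 1, 2], [0, 1, 2, 1, 3, 1, 0], [1, 2, 1, 3, 1], [3], [0, 1, 0, 2, 1, 3, 1, 0, 2, 1, 3], [0, 1, 0], [2, 1, 3, 1, 0, 2, 1], [0, 2, 1, 3, 1, 0, 2], [1, 0, 2, 1, 3, 1, 2], [0, 2, 3, 1, 0], [1, 0, 2, 3, 1], [0, 1, 0, 2, 3], [2, 1, 0, 3, 1, 0, 2, 1, 3], [0, 1], [1, 2, 1, 3, 1, 0, 2, 1], [1, 0, 2, 1, 3, 1, 0, 2], [0, 2, 1, 3, 1, 2], [1, 0, 2, 3, 1, 0], [0, 2, 3, 1], [0, 1, 2, 3], [1, 2, 1, 0, 3, 1, 0, 2, 1, 3], [1, 0], [0, 2, 1, 3, 1, 0, 2, 1], [2, 1, 3, 1, 0, 2], [0, 1, 0, 2, 1, 3, 1, 2], [2, 3, 1, 0], [0, 1, 0, 2, 3, 1], [1, 0, 2, 3], [0, 2, 1, 0, 3, 1, 0, 2, 1, 3], [1], [0, 1, 2, 1, 3, 1, 0, 2, 1], [0, 1, 0, 2, 1, 3, 1, 0, 2], [2, 1, 3, 1, 2], [0, 1, 0, 2, 3, 1, 0], [2, 3, 1], [1, 2, 3], [0, 1, 2, 1, 0, 3, 1, 0, 2, 1, 3], [0], [1, 0, 2,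 1, 3, 1, 0, 2, 1], [1, 2, 1, 3, 1, 0, 2], [0, 1, 2, 1, 3, 1, 2], [1, 2, 3, 1, 0], [0, 1, 2, 3, 1], [0, 2, 3], [1, 0, 2, 1, 0, 3, 1, 0, 2, 1, 3], [], [0, 1, 0, 2, 1, 3, 1, 0, 2, 1], [0, 1, 2, 1, 3, 1, 0, 2], [1, 2, 1, 3, 1, 2], [0, 1, 2, 3, 1, 0], [1, 2, 3, 1], [2, 3], [0, 1, 0, 2, 1, 0, 3, 1, 0, 2, 1, 3]]"

lemma L_words: "L = map wordval WORDS" by code_simp
lemma WORDS_range: "list_all (list_all (\<lambda>i. i < 4)) WORDS" by code_simp
lemma ok_L: "list_all ok L" by code_simp
lemma ok_G: "list_all ok G" by code_simp
lemma ok_I: "ok I" by code_simp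
lemma ok_M: "ok M" by code_simp


interpretation W: group W_D4 by (rule group_W)

lemma nth_4: "c < 4 \<Longrightarrow> [a0,a1,a2,a3] ! c = (if c = 0 then a0 else if c = 1 then a1 else if c = 2 then a2 else a3)"
  using four_cases[of c] by auto

lemma dec_I: "dec I = mat 1"
proof -
  have "[0,1,2,3] ! pos j = pos j" for j :: 4 using four_cases[OF pos_lt[of j]] by auto
  moreover have "[1,1,1,1] ! pos j = (1::int)" for j :: 4 using four_cases[OF pos_lt[of j]] by auto
  ultimately show ?thesis by (auto simp: vec_eq_iff dec_entry mat_def I_def)
qed

lemma upt4: "[0..<4] = [0,1,2,3::nat]" by code_simp

lemma valid_perm1: "p permutes (UNIV::4 set) \<Longrightarrow> valid (\<lambda>_. 1) p"
  by (simp add: valid_def)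

lemma gm0: "gm 0 = DP (\<lambda>_. 1) (Transposition.transpose 1 2)"
  unfolding vec_eq_iff forall_4 by (simp add: gm_def G_def dec_entry DP_entry pos_def Transposition.transpose_def)
lemma gm1: "gm 1 = DP (\<lambda>_. 1) (Transposition.transpose 2 3)"
  unfolding vec_eq_iff forall_4 by (simp add: gm_def G_def dec_entry DP_entry pos_def Transposition.transpose_def)
lemma gm2: "gm 2 = DP (\<lambda>_. 1) (Transposition.transpose 3 4)"
  unfolding vec_eq_iff forall_4 by (simp add: gm_def G_def dec_entry DP_entry pos_def Transposition.transpose_def)
lemma gm3: "gm 3 = DP (\<lambda>i. if i = 3 \<or> i = 4 then -1 else 1) (Transposition.transpose 3 4)"
  unfolding vec_eq_iff forall_4 by (simp add: gm_def G_def dec_entry DP_entry pos_def Transposition.transpose_def)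

lemma DP_carrier: "valid e p \<Longrightarrow> DP e p \<in> carrier W_D4"
  unfolding carrier_W by blast

lemma gm_carrier: "i < 4 \<Longrightarrow> gm i \<in> carrier W_D4"
proof -
  assume "i < 4"
  then consider "i = 0" | "i = 1" | "i = 2" | "i = 3" by (metis four_cases)
  then show ?thesis
  proof cases
    case 1
    have "valid (\<lambda>_. 1) (Transposition.transpose 1 2)" by (simp add: valid_def permutes_swap_id)
    then show ?thesis unfolding 1 gm0 by (rule DP_carrier)
  next
    case 2
    have "valid (\<lambda>_. 1) (Transposition.transpose 2 3)" by (simp add: valid_def permutes_swap_id)
    then show ?thesis unfolding 2 gm1 by (rule DP_carrier)
  next
    case 3
    have "valid (\<lambda>_. 1) (Transposition.transpose 3 4)" by (simp add: valid_def permutes_swap_id)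
    then show ?thesis unfolding 3 gm2 by (rule DP_carrier)
  next
    case 4
    have "(\<Prod>i\<in>UNIV. (if i = (3::4) \<or> i = 4 then -1 else 1::real)) = 1"
      unfolding UNIV_4 by simp
    then have "valid (\<lambda>i. if i = 3 \<or> i = 4 then -1 else 1) (Transposition.transpose 3 4)"
      by (simp add: valid_def permutes_swap_id)
    then show ?thesis unfolding gm3 4 by (rule DP_carrier)
  qed
qed

lemma ok_G_nth: "i < 4 \<Longrightarrow> ok (G ! i)"
  using ok_G four_cases[of i] by (auto simp: G_def)

lemma wordval_snoc: "wordval (ws @ [i]) = lmul (wordval ws) (G ! i)"
  by (simp add: wordval_def)

lemma wordval_dec:
  "list_all (\<lambda>i. i < 4) ws \<Longrightarrow> ok (wordval ws) \<and> dec (wordval ws) = foldl (\<lambda>A i. A ** gm i) (mat 1) ws"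
proof (induction ws rule: rev_induct)
  case Nil then show ?case by (simp add: wordval_def ok_I dec_I)
next
  case (snoc i ws)
  then have ih: "ok (wordval ws)" "dec (wordval ws) = foldl (\<lambda>A i. A ** gm i) (mat 1) ws" and i4: "i < 4" by auto
  show ?case using ih ok_G_nth[OF i4]
    by (simp add: wordval_snoc lmul_ok dec_mult[symmetric] gm_def)
qed

lemma foldl_gm_carrier:
  "list_all (\<lambda>i. i < 4) ws \<Longrightarrow> foldl (\<lambda>A i. A ** gm i) (mat 1) ws \<in> carrier W_D4"
proof (induction ws rule: rev_induct)
  case Nil then show ?case using W.one_closed by simp
next
  case (snoc i ws)
  then show ?case using W.m_closed[of _ "gm i"] gm_carrier by simp
qed

lemma L_word: "v \<in> set L \<Longrightarrow> \<exists>ws. list_all (\<lambda>i. i < 4) ws \<and> v = wordval ws"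
  using WORDS_range unfolding L_words by (auto simp: list_all_iff)

lemma ok_L': "v \<in> set L \<Longrightarrow> ok v" using ok_L by (simp add: list_all_iff)

lemma dec_L_carrier: "v \<in> set L \<Longrightarrow> dec v \<in> carrier W_D4"
  using L_word wordval_dec foldl_gm_carrier by metis

definition sg :: "real \<Rightarrow> int" where "sg r = (if r = 1 then 1 else -1)"

lemma mem_L: "(s, p) \<in> set L \<longleftrightarrow> s \<in> set S8 \<and> p \<in> set P24"
  by (auto simp: L_def)

lemma carrier_dec: "x \<in> carrier W_D4 \<Longrightarrow> \<exists>v\<in>set L. x = dec v"
proof -
  assume "x \<in> carrier W_D4"
  then obtain e p where x: "x = DP e p" and v: "valid e p" by (auto simp: carrier_W)
  have p: "p permutes UNIV" and e: "\<And>i. e i = 1 \<or> e i = -1" and pe: "(\<Prod>i\<in>UNIV. e i) = 1"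
    using v by (auto simp: valid_def)
  define s where "s = map (\<lambda>c. sg (e (p (idx c)))) [0..<4]"
  define q where "q = map (\<lambda>c. pos (p (idx c))) [0..<4]"
  have sge: "real_of_int (sg (e i)) = e i" for i using e[of i] by (auto simp: sg_def)
  have "dec (s, q) = x"
    unfolding x by (simp add: vec_eq_iff dec_entry DP_entry s_def q_def sge)
  moreover have "q \<in> set P24"
  proof -
    have "inj_on (\<lambda>c. pos (p (idx c))) {0..<4}"
    proof (rule inj_onI)
      fix a b assume "a \<in> {0..<4}" "b \<in> {0..<4}" "pos (p (idx a)) = pos (p (idx b))"
      then have "p (idx a) = p (idx b)" by simp
      then have "idx a = idx b" using permutes_inj[OF p] by (simp add: inj_def)
      then show "a = b" using \<open>a \<in> {0..<4}\<close> \<open>b \<in> {0..<4}\<close> by (metis atLeastLessThan_iff pos_idx)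
    qed
    then have "distinct q" by (simp add: q_def distinct_map)
    moreover have "set q \<subseteq> set [0,1,2,3]"
    proof -
      have "pos c \<in> set [0,1,2,3]" for c using four_cases[OF pos_lt[of c]] by auto
      then show ?thesis unfolding q_def by (metis (no_types, lifting) imageE set_map subsetI)
    qed
    ultimately show ?thesis by (simp add: P24_def set_n_lists q_def)
  qed
  moreover have "s \<in> set S8"
  proof -
    have "set s \<subseteq> set [1,-1]" by (auto simp: s_def sg_def)
    moreover have "real_of_int (prod_list s) = (\<Prod>i\<in>UNIV. e (p i))"
      unfolding UNIV_4 by (simp add: s_def upt4 sge idx_def)
    moreover have "(\<Prod>i\<in>UNIV. e (p i)) = 1"
      using prod.permute[OF p, of e] pe by (simp add: o_def)
    ultimately show ?thesis by (simp add: S8_def set_n_lists s_def)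
  qed
  ultimately show ?thesis using mem_L by metis
qed

lemma carrier_eq: "carrier W_D4 = dec ` set L"
  using carrier_dec dec_L_carrier by blast

lemma gen_induct:
  assumes x: "x \<in> carrier W_D4" and one: "P (mat 1)"
    and step: "\<And>y i. y \<in> carrier W_D4 \<Longrightarrow> P y \<Longrightarrow> i < 4 \<Longrightarrow> P (y ** gm i)"
  shows "P x"
proof -
  obtain v where v: "v \<in> set L" "x = dec v" using carrier_dec[OF x] by blast
  obtain ws where ws: "list_all (\<lambda>i. i < 4) ws" "v = wordval ws" using L_word[OF v(1)] by blast
  have "P (foldl (\<lambda>A i. A ** gm i) (mat 1) ws)" using ws(1)
  proof (induction ws rule: rev_induct)
    case Nil then show ?case using one by simp
  next
    case (snoc i ws)
    then show ?case using step[OF foldl_gm_carrier] by simp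
  qed
  then show ?thesis using wordval_dec[OF ws(1)] v ws by simp
qed


(* ---- a/C1.thy ---- *)


definition InvL :: "el list" where "InvL = [([1,1,1,1],[3,2,1,0]), ([1,-1,-1,1],[3,2,1,0]), ([-1,1,1,-1],[3,2,1,0]), ([-1,-1,-1,-1],[3,2,1,0]), ([1,1,1,1],[3,1,2,0]), ([1,-1,-1,1],[3,1,2,0]), ([-1,1,1,-1],[3,1,2,0]), ([-1,-1,-1,-1],[3,1,2,0]), ([1,1,1,1],[2,3,0,1]), ([-1,1,-1,1],[2,3,0,1]), ([1,-1,1,-1],[2,3,0,1]), ([-1,-1,-1,-1],[2,3,0,1]), ([1,1,1,1],[0,3,2,1]), ([-1,1,-1,1],[0,3,2,1]), ([1,-1,1,-1],[0,3,2,1]), ([-1,-1,-1,-1],[0,3,2,1]), ([1,1,1,1],[1,0,3,2]), ([-1,-1,1,1],[1,0,3,2]), ([1,1,-1,-1],[1,0,3,2]), ([-1,-1,-1,-1],[1,0,3,2]), ([1,1,1,1],[0,1,3,2]), ([-1,-1,1,1],[0,1,3,2]), ([1,1,-1,-1],[0,1,3,2]), ([-1,-1,-1,-1],[0,1,3,2]), ([1,1,1,1],[2,1,0,3]), ([-1,1,-1,1],[2,1,0,3]), ([1,-1,1,-1],[2,1,0,3]), ([-1,-1,-1,-1],[2,1,0,3]), ([1,1,1,1],[0,2,1,3]), ([1,-1,-1,1],[0,2,1,3]), ([-1,1,1,-1],[0,2,1,3]), ([-1,-1,-1,-1],[0,2,1,3]), ([1,1,1,1],[1,0,2,3]), ([-1,-1,1,1],[1,0,2,3]),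 ([1,1,-1,-1],[1,0,2,3]), ([-1,-1,-1,-1],[1,0,2,3]), ([-1,-1,1,1],[0,1,2,3]), ([-1,1,-1,1],[0,1,2,3]), ([1,-1,-1,1],[0,1,2,3]), ([-1,1,1,-1],[0,1,2,3]), ([1,-1,1,-1],[0,1,2,3]), ([1,1,-1,-1],[0,1,2,3])]"
definition C0L :: "el list" where "C0L = [([-1,-1,1,1],[0,1,2,3]), ([-1,1,-1,1],[0,1,2,3]), ([1,-1,-1,1],[0,1,2,3]), ([-1,1,1,-1],[0,1,2,3]), ([1,-1,1,-1],[0,1,2,3]), ([1,1,-1,-1],[0,1,2,3])]"
definition C1L :: "el list" where "C1L = [([1,1,1,1],[3,2,1,0]), ([-1,-1,-1,-1],[3,2,1,0]), ([1,1,1,1],[2,3,0,1]), ([-1,-1,-1,-1],[2,3,0,1]), ([1,1,1,1],[1,0,3,2]), ([-1,-1,-1,-1],[1,0,3,2])]"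
definition C2L :: "el list" where "C2L = [([1,-1,-1,1],[3,2,1,0]), ([-1,1,1,-1],[3,2,1,0]), ([-1,1,-1,1],[2,3,0,1]), ([1,-1,1,-1],[2,3,0,1]), ([-1,-1,1,1],[1,0,3,2]), ([1,1,-1,-1],[1,0,3,2])]"
definition C3L :: "el list" where "C3L = [([1,1,1,1],[3,1,2,0]), ([-1,1,1,-1],[3,1,2,0]), ([1,1,1,1],[0,3,2,1]), ([1,-1,1,-1],[0,3,2,1]), ([1,1,1,1],[0,1,3,2]), ([1,1,-1,-1],[0,1,3,2]), ([1,1,1,1],[2,1,0,3]), ([-1,1,-1,1],[2,1,0,3]), ([1,1,1,1],[0,2,1,3]), ([1,-1,-1,1],[0,2,1,3]), ([1,1,1,1],[1,0,2,3]), ([-1,-1,1,1],[1,0,2,3])]"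
definition REPS :: "el list" where "REPS = [([1,1,-1,-1],[0,1,2,3]), ([1,1,1,1],[1,0,3,2]), ([1,1,-1,-1],[1,0,3,2]), ([1,1,1,1],[1,0,2,3]), ([-1,-1,-1,-1],[1,0,2,3])]"

lemma S8_code [code]: "S8 = [[1,1,1,1], [-1,-1,1,1], [-1,1,-1,1], [1,-1,-1,1], [-1,1,1,-1], [1,-1,1,-1], [1,1,-1,-1], [-1,-1,-1,-1]]" by code_simp
lemma P24_code [code]: "P24 = [[3,2,1,0], [2,3,1,0], [3,1,2,0], [1,3,2,0], [2,1,3,0], [1,2,3,0], [3,2,0,1], [2,3,0,1], [3,0,2,1], [0,3,2,1], [2,0,3,1], [0,2,3,1], [3,1,0,2], [1,3,0,2], [3,0,1,2], [0,3,1,2], [1,0,3,2], [0,1,3,2], [2,1,0,3], [1,2,0,3], [2,0,1,3], [0,2,1,3], [1,0,2,3], [0,1,2,3]]" by code_simp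
lemma L_code [code]: "L = [([1,1,1,1],[3,2,1,0]), ([-1,-1,1,1],[3,2,1,0]), ([-1,1,-1,1],[3,2,1,0]), ([1,-1,-1,1],[3,2,1,0]), ([-1,1,1,-1],[3,2,1,0]), ([1,-1,1,-1],[3,2,1,0]), ([1,1,-1,-1],[3,2,1,0]), ([-1,-1,-1,-1],[3,2,1,0]), ([1,1,1,1],[2,3,1,0]), ([-1,-1,1,1],[2,3,1,0]), ([-1,1,-1,1],[2,3,1,0]), ([1,-1,-1,1],[2,3,1,0]), ([-1,1,1,-1],[2,3,1,0]), ([1,-1,1,-1],[2,3,1,0]), ([1,1,-1,-1],[2,3,1,0]), ([-1,-1,-1,-1],[2,3,1,0]), ([1,1,1,1],[3,1,2,0]), ([-1,-1,1,1],[3,1,2,0]), ([-1,1,-1,1],[3,1,2,0]), ([1,-1,-1,1],[3,1,2,0]), ([-1,1,1,-1],[3,1,2,0]), ([1,-1,1,-1],[3,1,2,0]), ([1,1,-1,-1],[3,1,2,0]), ([-1,-1,-1,-1],[3,1,2,0]), ([1,1,1,1],[1,3,2,0]), ([-1,-1,1,1],[1,3,2,0]), ([-1,1,-1,1],[1,3,2,0]), ([1,-1,-1,1],[1,3,2,0]), ([-1,1,1,-1],[1,3,2,0]), ([1,-1,1,-1],[1,3,2,0]), ([1,1,-1,-1],[1,3,2,0]), ([-1,-1,-1,-1],[1,3,2,0]), ([1,1,1,1],[2,1,3,0]), ([-1,-1,1,1],[2,1,3,0]), ([-1,1,-1,1],[2,1,3,0]), ([1,-1,-1,1],[2,1,3,0]),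 ([-1,1,1,-1],[2,1,3,0]), ([1,-1,1,-1],[2,1,3,0]), ([1,1,-1,-1],[2,1,3,0]), ([-1,-1,-1,-1],[2,1,3,0]), ([1,1,1,1],[1,2,3,0]), ([-1,-1,1,1],[1,2,3,0]), ([-1,1,-1,1],[1,2,3,0]), ([1,-1,-1,1],[1,2,3,0]), ([-1,1,1,-1],[1,2,3,0]), ([1,-1,1,-1],[1,2,3,0]), ([1,1,-1,-1],[1,2,3,0]), ([-1,-1,-1,-1],[1,2,3,0]), ([1,1,1,1],[3,2,0,1]), ([-1,-1,1,1],[3,2,0,1]), ([-1,1,-1,1],[3,2,0,1]), ([1,-1,-1,1],[3,2,0,1]), ([-1,1,1,-1],[3,2,0,1]), ([1,-1,1,-1],[3,2,0,1]), ([1,1,-1,-1],[3,2,0,1]), ([-1,-1,-1,-1],[3,2,0,1]), ([1,1,1,1],[2,3,0,1]), ([-1,-1,1,1],[2,3,0,1]), ([-1,1,-1,1],[2,3,0,1]), ([1,-1,-1,1],[2,3,0,1]), ([-1,1,1,-1],[2,3,0,1]), ([1,-1,1,-1],[2,3,0,1]), ([1,1,-1,-1],[2,3,0,1]), ([-1,-1,-1,-1],[2,3,0,1]), ([1,1,1,1],[3,0,2,1]), ([-1,-1,1,1],[3,0,2,1]), ([-1,1,-1,1],[3,0,2,1]), ([1,-1,-1,1],[3,0,2,1]), ([-1,1,1,-1],[3,0,2,1]), ([1,-1,1,-1],[3,0,2,1]), ([1,1,-1,-1],[3,0,2,1]), ([-1,-1,-1,-1],[3,0,2,1]), ([1,1,1,1],[0,3,2,1]),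 ([-1,-1,1,1],[0,3,2,1]), ([-1,1,-1,1],[0,3,2,1]), ([1,-1,-1,1],[0,3,2,1]), ([-1,1,1,-1],[0,3,2,1]), ([1,-1,1,-1],[0,3,2,1]), ([1,1,-1,-1],[0,3,2,1]), ([-1,-1,-1,-1],[0,3,2,1]), ([1,1,1,1],[2,0,3,1]), ([-1,-1,1,1],[2,0,3,1]), ([-1,1,-1,1],[2,0,3,1]), ([1,-1,-1,1],[2,0,3,1]), ([-1,1,1,-1],[2,0,3,1]), ([1,-1,1,-1],[2,0,3,1]), ([1,1,-1,-1],[2,0,3,1]), ([-1,-1,-1,-1],[2,0,3,1]), ([1,1,1,1],[0,2,3,1]), ([-1,-1,1,1],[0,2,3,1]), ([-1,1,-1,1],[0,2,3,1]), ([1,-1,-1,1],[0,2,3,1]), ([-1,1,1,-1],[0,2,3,1]), ([1,-1,1,-1],[0,2,3,1]), ([1,1,-1,-1],[0,2,3,1]), ([-1,-1,-1,-1],[0,2,3,1]), ([1,1,1,1],[3,1,0,2]), ([-1,-1,1,1],[3,1,0,2]), ([-1,1,-1,1],[3,1,0,2]), ([1,-1,-1,1],[3,1,0,2]), ([-1,1,1,-1],[3,1,0,2]), ([1,-1,1,-1],[3,1,0,2]), ([1,1,-1,-1],[3,1,0,2]), ([-1,-1,-1,-1],[3,1,0,2]), ([1,1,1,1],[1,3,0,2]), ([-1,-1,1,1],[1,3,0,2]), ([-1,1,-1,1],[1,3,0,2]), ([1,-1,-1,1],[1,3,0,2]), ([-1,1,1,-1],[1,3,0,2]), ([1,-1,1,-1],[1,3,0,2]),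 ([1,1,-1,-1],[1,3,0,2]), ([-1,-1,-1,-1],[1,3,0,2]), ([1,1,1,1],[3,0,1,2]), ([-1,-1,1,1],[3,0,1,2]), ([-1,1,-1,1],[3,0,1,2]), ([1,-1,-1,1],[3,0,1,2]), ([-1,1,1,-1],[3,0,1,2]), ([1,-1,1,-1],[3,0,1,2]), ([1,1,-1,-1],[3,0,1,2]), ([-1,-1,-1,-1],[3,0,1,2]), ([1,1,1,1],[0,3,1,2]), ([-1,-1,1,1],[0,3,1,2]), ([-1,1,-1,1],[0,3,1,2]), ([1,-1,-1,1],[0,3,1,2]), ([-1,1,1,-1],[0,3,1,2]), ([1,-1,1,-1],[0,3,1,2]), ([1,1,-1,-1],[0,3,1,2]), ([-1,-1,-1,-1],[0,3,1,2]), ([1,1,1,1],[1,0,3,2]), ([-1,-1,1,1],[1,0,3,2]), ([-1,1,-1,1],[1,0,3,2]), ([1,-1,-1,1],[1,0,3,2]), ([-1,1,1,-1],[1,0,3,2]), ([1,-1,1,-1],[1,0,3,2]), ([1,1,-1,-1],[1,0,3,2]), ([-1,-1,-1,-1],[1,0,3,2]), ([1,1,1,1],[0,1,3,2]), ([-1,-1,1,1],[0,1,3,2]), ([-1,1,-1,1],[0,1,3,2]), ([1,-1,-1,1],[0,1,3,2]), ([-1,1,1,-1],[0,1,3,2]), ([1,-1,1,-1],[0,1,3,2]), ([1,1,-1,-1],[0,1,3,2]), ([-1,-1,-1,-1],[0,1,3,2]), ([1,1,1,1],[2,1,0,3]), ([-1,-1,1,1],[2,1,0,3]), ([-1,1,-1,1],[2,1,0,3]),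 ([1,-1,-1,1],[2,1,0,3]), ([-1,1,1,-1],[2,1,0,3]), ([1,-1,1,-1],[2,1,0,3]), ([1,1,-1,-1],[2,1,0,3]), ([-1,-1,-1,-1],[2,1,0,3]), ([1,1,1,1],[1,2,0,3]), ([-1,-1,1,1],[1,2,0,3]), ([-1,1,-1,1],[1,2,0,3]), ([1,-1,-1,1],[1,2,0,3]), ([-1,1,1,-1],[1,2,0,3]), ([1,-1,1,-1],[1,2,0,3]), ([1,1,-1,-1],[1,2,0,3]), ([-1,-1,-1,-1],[1,2,0,3]), ([1,1,1,1],[2,0,1,3]), ([-1,-1,1,1],[2,0,1,3]), ([-1,1,-1,1],[2,0,1,3]), ([1,-1,-1,1],[2,0,1,3]), ([-1,1,1,-1],[2,0,1,3]), ([1,-1,1,-1],[2,0,1,3]), ([1,1,-1,-1],[2,0,1,3]), ([-1,-1,-1,-1],[2,0,1,3]), ([1,1,1,1],[0,2,1,3]), ([-1,-1,1,1],[0,2,1,3]), ([-1,1,-1,1],[0,2,1,3]), ([1,-1,-1,1],[0,2,1,3]), ([-1,1,1,-1],[0,2,1,3]), ([1,-1,1,-1],[0,2,1,3]), ([1,1,-1,-1],[0,2,1,3]), ([-1,-1,-1,-1],[0,2,1,3]), ([1,1,1,1],[1,0,2,3]), ([-1,-1,1,1],[1,0,2,3]), ([-1,1,-1,1],[1,0,2,3]), ([1,-1,-1,1],[1,0,2,3]), ([-1,1,1,-1],[1,0,2,3]), ([1,-1,1,-1],[1,0,2,3]), ([1,1,-1,-1],[1,0,2,3]), ([-1,-1,-1,-1],[1,0,2,3]),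 ([1,1,1,1],[0,1,2,3]), ([-1,-1,1,1],[0,1,2,3]), ([-1,1,-1,1],[0,1,2,3]), ([1,-1,-1,1],[0,1,2,3]), ([-1,1,1,-1],[0,1,2,3]), ([1,-1,1,-1],[0,1,2,3]), ([1,1,-1,-1],[0,1,2,3]), ([-1,-1,-1,-1],[0,1,2,3])]" by code_simp
definition inL :: "el \<Rightarrow> bool" where "inL v \<longleftrightarrow> fst v \<in> set S8 \<and> snd v \<in> set P24"
lemma inL_iff: "inL v \<longleftrightarrow> v \<in> set L" by (cases v) (simp add: inL_def mem_L)
definition WIT :: "el list" where "WIT = [([1,1,1,1],[1,3,2,0]), ([1,1,1,1],[1,3,2,0]), ([-1,-1,1,1],[1,3,2,0]), ([-1,-1,1,1],[1,3,2,0]), ([1,1,1,1],[1,3,2,0]), ([-1,-1,1,1],[1,3,2,0]), ([-1,-1,1,1],[1,3,2,0]), ([1,1,1,1],[1,3,2,0]), ([1,1,1,1],[3,1,2,0]), ([1,1,1,1],[3,1,2,0]), ([-1,-1,1,1],[3,1,2,0]), ([-1,-1,1,1],[3,1,2,0]), ([1,1,1,1],[3,1,2,0]), ([-1,-1,1,1],[3,1,2,0]), ([-1,-1,1,1],[3,1,2,0]), ([1,1,1,1],[3,1,2,0]), ([1,1,1,1],[3,2,1,0]), ([1,1,1,1],[3,2,1,0]), ([-1,1,-1,1],[3,2,1,0]), ([-1,1,-1,1],[3,2,1,0]), ([1,1,1,1],[3,2,1,0]), ([-1,1,-1,1],[3,2,1,0]), ([-1,1,-1,1],[3,2,1,0]),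 ([1,1,1,1],[3,2,1,0]), ([1,1,1,1],[1,3,0,2]), ([-1,-1,1,1],[1,3,0,2]), ([-1,-1,1,1],[1,3,0,2]), ([1,1,1,1],[1,3,0,2]), ([1,1,1,1],[3,1,0,2]), ([-1,-1,1,1],[3,1,0,2]), ([-1,-1,1,1],[3,1,0,2]), ([1,1,1,1],[3,1,0,2]), ([1,1,1,1],[1,0,3,2]), ([-1,1,-1,1],[1,0,3,2]), ([-1,1,-1,1],[1,0,3,2]), ([1,1,1,1],[1,0,3,2]), ([1,1,1,1],[3,2,1,0]), ([1,1,1,1],[3,1,2,0]), ([1,1,1,1],[1,3,2,0]), ([1,1,1,1],[3,1,0,2]), ([1,1,1,1],[1,3,0,2]), ([1,1,1,1],[1,0,3,2])]"

definition llab :: "el \<Rightarrow> nat" where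
  "llab v = (if v \<in> set C0L then 0 else if v \<in> set C1L then 1 else if v \<in> set C2L then 2
             else if v \<in> set C3L then 3 else 4)"

definition negl :: "nat \<Rightarrow> nat" where "negl k = (if k = 3 then 4 else if k = 4 then 3 else k)"

lemma InvL_filter: "filter (\<lambda>v. lmul v v = I \<and> v \<noteq> I \<and> v \<noteq> M) L = InvL" by code_simp
lemma InvL_conj: "list_all (\<lambda>v. list_all (\<lambda>i. lmul (lmul (G ! i) v) (G ! i) \<in> set InvL \<and>
     llab (lmul (lmul (G ! i) v) (G ! i)) = llab v) [0,1,2,3]) InvL" by code_simp
lemma G_invol: "list_all (\<lambda>i. lmul (G ! i) (G ! i) = I) [0,1,2,3]" by code_simp
lemma M_central: "list_all (\<lambda>v. lmul M v = lmul v M) L" by code_simp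
lemma M_Inv: "list_all (\<lambda>v. lmul M v \<in> set InvL \<and> llab (lmul M v) = negl (llab v)) InvL" by code_simp
lemma center_L: "list_all (\<lambda>v. list_all (\<lambda>i. lmul v (G ! i) = lmul (G ! i) v) [0,1,2,3] \<longrightarrow> v = I \<or> v = M) L"
  by code_simp
lemma REPS_ok: "list_all (\<lambda>k. REPS ! k \<in> set InvL \<and> llab (REPS ! k) = k) [0,1,2,3,4]" by code_simp
lemma InvL_L: "list_all inL InvL" by code_simp
lemma InvL_lab: "list_all (\<lambda>v. llab v < 5) InvL" by code_simp
lemma class_wit: "list_all (\<lambda>(v,g). inL g \<and> lmul g v = lmul (REPS ! llab v) g) (zip InvL WIT) \<and> length WIT = length InvL" by code_simp
lemma M_L: "inL M" by code_simp
lemma I_L: "inL I" by code_simp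

lemma G_L: "list_all inL G" by code_simp

section \<open>Matrix level\<close>

definition MM :: "real^4^4" where "MM = dec M"
definition Inv :: "(real^4^4) set" where
  "Inv = {x \<in> carrier W_D4. x ** x = mat 1 \<and> x \<noteq> mat 1 \<and> x \<noteq> MM}"
definition enc :: "real^4^4 \<Rightarrow> el" where "enc x = (SOME v. v \<in> set L \<and> dec v = x)"
definition lab :: "real^4^4 \<Rightarrow> nat" where "lab x = llab (enc x)"
definition rep :: "nat \<Rightarrow> real^4^4" where "rep k = dec (REPS ! k)"

lemma I_L': "I \<in> set L" using I_L inL_iff by blast
lemma M_L': "M \<in> set L" using M_L inL_iff by blast
lemma G_L': "i < 4 \<Longrightarrow> G ! i \<in> set L"
  using G_L four_cases[of i] by (auto simp: inL_iff G_def)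

lemma dec_eq_iff: "v \<in> set L \<Longrightarrow> w \<in> set L \<Longrightarrow> dec v = dec w \<longleftrightarrow> v = w"
  using dec_inj ok_L' by blast
lemma enc_dec: "v \<in> set L \<Longrightarrow> enc (dec v) = v"
  unfolding enc_def by (rule some_equality) (auto simp: dec_eq_iff)
lemma decmul: "v \<in> set L \<Longrightarrow> w \<in> set L \<Longrightarrow> dec v ** dec w = dec (lmul v w)"
  using dec_mult ok_L' by blast
lemma lmul_L: "v \<in> set L \<Longrightarrow> w \<in> set L \<Longrightarrow> lmul v w \<in> set L"
proof -
  assume v: "v \<in> set L" and w: "w \<in> set L"
  have "dec v ** dec w \<in> carrier W_D4" using W.m_closed dec_L_carrier v w by simp
  then obtain u where u: "u \<in> set L" "dec v ** dec w = dec u" using carrier_dec by blast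
  have "dec (lmul v w) = dec u" using u decmul v w by simp
  then have "lmul v w = u" using dec_inj lmul_ok ok_L' v w u by blast
  with u show ?thesis by simp
qed

lemma InvL_L': "v \<in> set InvL \<Longrightarrow> v \<in> set L"
  using InvL_L by (auto simp: list_all_iff inL_iff)

lemma Inv_eq: "Inv = dec ` set InvL"
proof -
  have "x \<in> Inv \<longleftrightarrow> (\<exists>v\<in>set L. x = dec v \<and> lmul v v = I \<and> v \<noteq> I \<and> v \<noteq> M)" for x
  proof
    assume "x \<in> Inv"
    then obtain v where v: "v \<in> set L" "x = dec v" unfolding Inv_def using carrier_dec by blast
    then show "\<exists>v\<in>set L. x = dec v \<and> lmul v v = I \<and> v \<noteq> I \<and> v \<noteq> M"
      using \<open>x \<in> Inv\<close> unfolding Inv_def MM_def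
      by (auto simp: decmul dec_I[symmetric] dec_eq_iff lmul_L I_L' M_L')
  next
    assume "\<exists>v\<in>set L. x = dec v \<and> lmul v v = I \<and> v \<noteq> I \<and> v \<noteq> M"
    then obtain v where v: "v \<in> set L" "x = dec v" "lmul v v = I" "v \<noteq> I" "v \<noteq> M" by blast
    then show "x \<in> Inv" unfolding Inv_def MM_def
      by (auto simp: decmul dec_I[symmetric] dec_eq_iff lmul_L I_L' M_L' dec_L_carrier)
  qed
  then have "Inv = dec ` set (filter (\<lambda>v. lmul v v = I \<and> v \<noteq> I \<and> v \<noteq> M) L)" by auto
  then show ?thesis by (simp add: InvL_filter)
qed

lemma lab_dec: "v \<in> set InvL \<Longrightarrow> lab (dec v) = llab v"
  by (simp add: lab_def enc_dec InvL_L')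

lemma Inv_carrier: "x \<in> Inv \<Longrightarrow> x \<in> carrier W_D4" by (simp add: Inv_def)

lemma Inv_lab_lt: "x \<in> Inv \<Longrightarrow> lab x < 5"
  using InvL_lab by (auto simp: Inv_eq lab_dec list_all_iff)

lemma gm_dec: "gm i = dec (G ! i)" by (simp add: gm_def)

lemma gm_invol: "i < 4 \<Longrightarrow> gm i ** gm i = mat 1"
  using G_invol four_cases[of i] by (auto simp: gm_dec decmul G_L' dec_I[symmetric])

lemma gm_inv: "i < 4 \<Longrightarrow> inv\<^bsub>W_D4\<^esub> (gm i) = gm i"
  using W.inv_equality[of "gm i" "gm i"] gm_invol gm_carrier by simp

lemma conj_gen: "x \<in> Inv \<Longrightarrow> i < 4 \<Longrightarrow> gm i ** x ** gm i \<in> Inv \<and> lab (gm i ** x ** gm i) = lab x"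
proof -
  assume x: "x \<in> Inv" and i: "i < 4"
  then obtain v where v: "v \<in> set InvL" "x = dec v" by (auto simp: Inv_eq)
  have vL: "v \<in> set L" using InvL_L' v by blast
  have e: "gm i ** x ** gm i = dec (lmul (lmul (G ! i) v) (G ! i))"
    using v vL G_L'[OF i] by (simp add: gm_dec decmul lmul_L)
  have "lmul (lmul (G ! i) v) (G ! i) \<in> set InvL \<and> llab (lmul (lmul (G ! i) v) (G ! i)) = llab v"
    using InvL_conj v(1) i four_cases[of i] by (auto simp: list_all_iff)
  then show ?thesis using e v by (simp add: Inv_eq lab_dec)
qed


(* ---- a/C2.thy ---- *)


lemmas gen_induct' = gen_induct[consumes 1, case_names one step]
lemma conj_lab:
  assumes g: "g \<in> carrier W_D4"
  shows "\<forall>x\<in>Inv. g ** x ** inv\<^bsub>W_D4\<^esub> g \<in> Inv \<and> lab (g ** x ** inv\<^bsub>W_D4\<^esub> g) = lab x"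
  using g
proof (induction g rule: gen_induct')
  case one
  show ?case using W.inv_one by simp
next
  case (step y i)
  show ?case
  proof
    fix x assume x: "x \<in> Inv"
    have yc: "y \<in> carrier W_D4" and gc: "gm i \<in> carrier W_D4" using step gm_carrier by auto
    have "inv\<^bsub>W_D4\<^esub> (y ** gm i) = gm i ** inv\<^bsub>W_D4\<^esub> y"
      using W.inv_mult_group[OF yc gc] gm_inv[OF \<open>i < 4\<close>] by simp
    then have "y ** gm i ** x ** inv\<^bsub>W_D4\<^esub> (y ** gm i) = y ** (gm i ** x ** gm i) ** inv\<^bsub>W_D4\<^esub> y"
      by (simp add: matrix_mul_assoc)
    moreover have z: "gm i ** x ** gm i \<in> Inv \<and> lab (gm i ** x ** gm i) = lab x"
      using conj_gen[OF x \<open>i < 4\<close>] .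
    moreover have "y ** (gm i ** x ** gm i) ** inv\<^bsub>W_D4\<^esub> y \<in> Inv \<and>
        lab (y ** (gm i ** x ** gm i) ** inv\<^bsub>W_D4\<^esub> y) = lab (gm i ** x ** gm i)"
      using step z by blast
    ultimately show "y ** gm i ** x ** inv\<^bsub>W_D4\<^esub> (y ** gm i) \<in> Inv \<and>
        lab (y ** gm i ** x ** inv\<^bsub>W_D4\<^esub> (y ** gm i)) = lab x"
      by simp
  qed
qed

lemma REPS_L: "k < 5 \<Longrightarrow> REPS ! k \<in> set InvL \<and> llab (REPS ! k) = k"
  using REPS_ok by (auto simp: list_all_iff less_Suc_eq numeral_eq_Suc)

lemma rep_Inv: "k < 5 \<Longrightarrow> rep k \<in> Inv" using REPS_L by (auto simp: rep_def Inv_eq)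
lemma lab_rep: "k < 5 \<Longrightarrow> lab (rep k) = k" using REPS_L by (simp add: rep_def lab_dec)

lemma class_rep:
  assumes x: "x \<in> Inv"
  shows "\<exists>g\<in>carrier W_D4. g ** x ** inv\<^bsub>W_D4\<^esub> g = rep (lab x)"
proof -
  obtain n where n: "n < length InvL" "x = dec (InvL ! n)"
    using x by (auto simp: Inv_eq in_set_conv_nth)
  define v where "v = InvL ! n"
  define g where "g = WIT ! n"
  have vI: "v \<in> set InvL" using n by (simp add: v_def)
  have "(v, g) \<in> set (zip InvL WIT)" using n class_wit
    by (auto simp: v_def g_def in_set_conv_nth)
  then have gL: "g \<in> set L" and eq: "lmul g v = lmul (REPS ! llab v) g"
    using class_wit by (auto simp: list_all_iff inL_iff)
  have vL: "v \<in> set L" using InvL_L' vI by blast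
  have kl: "llab v < 5" using InvL_lab vI by (auto simp: list_all_iff)
  have rL: "REPS ! llab v \<in> set L" using REPS_L[OF kl] InvL_L' by blast
  have gc: "dec g \<in> carrier W_D4" using dec_L_carrier gL by blast
  have xc: "x \<in> carrier W_D4" using x Inv_carrier by blast
  have "dec g ** x = rep (lab x) ** dec g"
    using n(2) eq gL vL rL by (simp add: decmul rep_def lab_dec vI v_def[symmetric])
  then have "dec g ** x ** inv\<^bsub>W_D4\<^esub> (dec g) = rep (lab x) ** dec g ** inv\<^bsub>W_D4\<^esub> (dec g)" by simp
  also have "\<dots> = rep (lab x)"
    using W.r_inv[OF gc] by (simp add: matrix_mul_assoc[symmetric])
  finally show ?thesis using gc by blast
qed

lemma conj_inv_carrier:
  "g \<in> carrier W_D4 \<Longrightarrow> x \<in> carrier W_D4 \<Longrightarrow> g ** x ** inv\<^bsub>W_D4\<^esub> g \<in> carrier W_D4"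
  using W.m_closed W.inv_closed by simp

lemma cj_iff:
  assumes x: "x \<in> Inv" and y: "y \<in> Inv"
  shows "(\<exists>g\<in>carrier W_D4. g ** x ** inv\<^bsub>W_D4\<^esub> g = y) \<longleftrightarrow> lab x = lab y"
proof
  assume "\<exists>g\<in>carrier W_D4. g ** x ** inv\<^bsub>W_D4\<^esub> g = y"
  then obtain g where g: "g \<in> carrier W_D4" "g ** x ** inv\<^bsub>W_D4\<^esub> g = y" by blast
  have "lab (g ** x ** inv\<^bsub>W_D4\<^esub> g) = lab x" using conj_lab[OF g(1)] x by blast
  then show "lab x = lab y" using g(2) by simp
next
  assume l: "lab x = lab y"
  obtain g1 where g1: "g1 \<in> carrier W_D4" "g1 ** x ** inv\<^bsub>W_D4\<^esub> g1 = rep (lab x)" using class_rep[OF x] by blast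
  obtain g2 where g2: "g2 \<in> carrier W_D4" "g2 ** y ** inv\<^bsub>W_D4\<^esub> g2 = rep (lab y)" using class_rep[OF y] by blast
  define h where "h = inv\<^bsub>W_D4\<^esub> g2 ** g1"
  have hc: "h \<in> carrier W_D4" using W.m_closed[OF W.inv_closed[OF g2(1)] g1(1)] by (simp add: h_def)
  have ih: "inv\<^bsub>W_D4\<^esub> h = inv\<^bsub>W_D4\<^esub> g1 ** g2"
    using W.inv_mult_group[OF W.inv_closed[OF g2(1)] g1(1)] W.inv_inv[OF g2(1)] by (simp add: h_def)
  have li: "inv\<^bsub>W_D4\<^esub> g2 ** g2 = mat 1" using W.l_inv[OF g2(1)] by simp
  have "h ** x ** inv\<^bsub>W_D4\<^esub> h = inv\<^bsub>W_D4\<^esub> g2 ** (g1 ** x ** inv\<^bsub>W_D4\<^esub> g1) ** g2"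
    unfolding ih unfolding h_def by (simp only: matrix_mul_assoc)
  also have "\<dots> = inv\<^bsub>W_D4\<^esub> g2 ** (g2 ** y ** inv\<^bsub>W_D4\<^esub> g2) ** g2"
    unfolding g1(2) g2(2) l ..
  also have "\<dots> = (inv\<^bsub>W_D4\<^esub> g2 ** g2) ** y ** (inv\<^bsub>W_D4\<^esub> g2 ** g2)"
    by (simp only: matrix_mul_assoc)
  also have "\<dots> = y" unfolding li by simp
  finally show "\<exists>g\<in>carrier W_D4. g ** x ** inv\<^bsub>W_D4\<^esub> g = y" using hc by blast
qed

lemma MM_carrier: "MM \<in> carrier W_D4" using dec_L_carrier M_L' by (simp add: MM_def)
lemma MM_central: "x \<in> carrier W_D4 \<Longrightarrow> MM ** x = x ** MM"
proof -
  assume "x \<in> carrier W_D4"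
  then obtain v where v: "v \<in> set L" "x = dec v" using carrier_dec by blast
  have "lmul M v = lmul v M" using M_central v(1) by (simp add: list_all_iff)
  then show ?thesis using v M_L' by (simp add: MM_def decmul)
qed
lemma MM_ne_one: "MM \<noteq> mat 1"
proof -
  have "M \<noteq> I" by (simp add: M_def I_def)
  then show ?thesis using dec_eq_iff[OF M_L' I_L'] by (simp add: MM_def dec_I[symmetric])
qed
lemma neg_Inv: "x \<in> Inv \<Longrightarrow> MM ** x \<in> Inv \<and> lab (MM ** x) = negl (lab x)"
proof -
  assume "x \<in> Inv"
  then obtain v where v: "v \<in> set InvL" "x = dec v" by (auto simp: Inv_eq)
  have "lmul M v \<in> set InvL \<and> llab (lmul M v) = negl (llab v)" using M_Inv v(1) by (simp add: list_all_iff)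
  then show ?thesis using v InvL_L' M_L' by (simp add: MM_def decmul Inv_eq lab_dec)
qed
lemma center:
  assumes x: "x \<in> carrier W_D4" and c: "\<And>i. i < 4 \<Longrightarrow> x ** gm i = gm i ** x"
  shows "x = mat 1 \<or> x = MM"
proof -
  obtain v where v: "v \<in> set L" "x = dec v" using carrier_dec x by blast
  have "lmul v (G ! i) = lmul (G ! i) v" if "i < 4" for i
    using c[OF that] v G_L'[OF that] by (simp add: gm_dec decmul dec_eq_iff lmul_L)
  then have "v = I \<or> v = M" using center_L v(1) by (auto simp: list_all_iff)
  then show ?thesis using v by (auto simp: MM_def dec_I)
qed


(* ---- a/D1.thy ---- *)


lemma auto_hom: "a \<in> auto W_D4 \<Longrightarrow> group_hom W_D4 W_D4 a"
  unfolding group_hom_def group_hom_axioms_def auto_def using group_W by auto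

lemma a_carrier: "a \<in> auto W_D4 \<Longrightarrow> x \<in> carrier W_D4 \<Longrightarrow> a x \<in> carrier W_D4"
  using group_hom.hom_closed[OF auto_hom] by blast
lemma a_mult: "a \<in> auto W_D4 \<Longrightarrow> x \<in> carrier W_D4 \<Longrightarrow> y \<in> carrier W_D4 \<Longrightarrow> a (x ** y) = a x ** a y"
  using group_hom.hom_mult[OF auto_hom] by fastforce
lemma a_one: "a \<in> auto W_D4 \<Longrightarrow> a (mat 1) = mat 1"
  using group_hom.hom_one[OF auto_hom] by fastforce
lemma a_inv: "a \<in> auto W_D4 \<Longrightarrow> x \<in> carrier W_D4 \<Longrightarrow> a (inv\<^bsub>W_D4\<^esub> x) = inv\<^bsub>W_D4\<^esub> (a x)"
  using group_hom.hom_inv[OF auto_hom] by fastforce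
lemma a_bij: "a \<in> auto W_D4 \<Longrightarrow> bij_betw a (carrier W_D4) (carrier W_D4)"
  by (simp add: auto_def Bij_def)
lemma a_inj: "a \<in> auto W_D4 \<Longrightarrow> x \<in> carrier W_D4 \<Longrightarrow> y \<in> carrier W_D4 \<Longrightarrow> a x = a y \<Longrightarrow> x = y"
  using a_bij by (metis bij_betw_def inj_onD)
lemma a_surj: "a \<in> auto W_D4 \<Longrightarrow> y \<in> carrier W_D4 \<Longrightarrow> \<exists>x\<in>carrier W_D4. y = a x"
proof -
  assume a: "a \<in> auto W_D4" and y: "y \<in> carrier W_D4"
  have "y \<in> a ` carrier W_D4" using a_bij[OF a] y by (simp add: bij_betw_def)
  then show ?thesis by blast
qed

lemma a_MM: assumes a: "a \<in> auto W_D4" shows "a MM = MM"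
proof -
  have c: "a MM \<in> carrier W_D4" using a_carrier[OF a MM_carrier] .
  have "a MM ** gm i = gm i ** a MM" if i: "i < 4" for i
  proof -
    obtain z where z: "z \<in> carrier W_D4" "gm i = a z" using a_surj[OF a gm_carrier[OF i]] by blast
    have "a MM ** a z = a (MM ** z)" using a_mult[OF a MM_carrier z(1)] by simp
    also have "\<dots> = a (z ** MM)" using MM_central[OF z(1)] by simp
    also have "\<dots> = a z ** a MM" using a_mult[OF a z(1) MM_carrier] .
    finally show ?thesis using z(2) by simp
  qed
  then have "a MM = mat 1 \<or> a MM = MM" using center[OF c] by blast
  moreover have "a MM \<noteq> mat 1"
  proof
    assume "a MM = mat 1"
    then have "a MM = a (mat 1)" using a_one[OF a] by simp
    then have "MM = mat 1" using a_inj[OF a MM_carrier W.one_closed[simplified]] by blast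
    then show False using MM_ne_one by simp
  qed
  ultimately show ?thesis by blast
qed

lemma a_Inv: assumes a: "a \<in> auto W_D4" and x: "x \<in> Inv" shows "a x \<in> Inv"
proof -
  have xc: "x \<in> carrier W_D4" and xx: "x ** x = mat 1" and x1: "x \<noteq> mat 1" and xm: "x \<noteq> MM"
    using x by (auto simp: Inv_def)
  have "a x ** a x = mat 1" using a_mult[OF a xc xc] xx a_one[OF a] by simp
  moreover have "a x \<noteq> mat 1"
    using a_inj[OF a xc W.one_closed[simplified]] a_one[OF a] x1 by metis
  moreover have "a x \<noteq> MM"
    using a_inj[OF a xc MM_carrier] a_MM[OF a] xm by metis
  ultimately show ?thesis using a_carrier[OF a xc] by (simp add: Inv_def)
qed

lemma a_conj: assumes a: "a \<in> auto W_D4" and g: "g \<in> carrier W_D4" and x: "x \<in> carrier W_D4"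
  shows "a (g ** x ** inv\<^bsub>W_D4\<^esub> g) = a g ** a x ** inv\<^bsub>W_D4\<^esub> (a g)"
proof -
  have gx: "g ** x \<in> carrier W_D4" using W.m_closed[OF g x] by simp
  have ig: "inv\<^bsub>W_D4\<^esub> g \<in> carrier W_D4" using W.inv_closed[OF g] .
  show ?thesis using a_mult[OF a gx ig] a_mult[OF a g x] a_inv[OF a g] by simp
qed

lemma a_lab: assumes a: "a \<in> auto W_D4" and x: "x \<in> Inv" and y: "y \<in> Inv" and l: "lab x = lab y"
  shows "lab (a x) = lab (a y)"
proof -
  obtain g where g: "g \<in> carrier W_D4" "g ** x ** inv\<^bsub>W_D4\<^esub> g = y" using cj_iff[OF x y] l by blast
  have "a y = a g ** a x ** inv\<^bsub>W_D4\<^esub> (a g)"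
    using a_conj[OF a g(1) Inv_carrier[OF x]] g(2) by simp
  then have "\<exists>h\<in>carrier W_D4. h ** a x ** inv\<^bsub>W_D4\<^esub> h = a y"
    using a_carrier[OF a g(1)] by metis
  then show ?thesis using cj_iff[OF a_Inv[OF a x] a_Inv[OF a y]] by blast
qed


interpretation AG: group "AutoGroup W_D4" by (rule W.AutoGroup)

lemma AG_carrier: "carrier (AutoGroup W_D4) = auto W_D4" by (simp add: AutoGroup_def BijGroup_def)
lemma AG_mult: "a \<in> auto W_D4 \<Longrightarrow> b \<in> auto W_D4 \<Longrightarrow> a \<otimes>\<^bsub>AutoGroup W_D4\<^esub> b = compose (carrier W_D4) a b"
  by (simp add: AutoGroup_def BijGroup_def auto_def)
lemma AG_one: "\<one>\<^bsub>AutoGroup W_D4\<^esub> = (\<lambda>x\<in>carrier W_D4. x)"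
  by (simp add: AutoGroup_def BijGroup_def)

lemma a_inverse: assumes a: "a \<in> auto W_D4" shows "\<exists>b\<in>auto W_D4. \<forall>x\<in>carrier W_D4. b (a x) = x"
proof -
  define b where "b = inv\<^bsub>AutoGroup W_D4\<^esub> a"
  have ac: "a \<in> carrier (AutoGroup W_D4)" using a AG_carrier by simp
  have bc: "b \<in> auto W_D4" using AG.inv_closed[OF ac] AG_carrier by (simp add: b_def)
  have "b \<otimes>\<^bsub>AutoGroup W_D4\<^esub> a = \<one>\<^bsub>AutoGroup W_D4\<^esub>" using AG.l_inv[OF ac] by (simp add: b_def)
  then have e: "compose (carrier W_D4) b a = (\<lambda>x\<in>carrier W_D4. x)" using AG_mult[OF bc a] AG_one by simp
  have "b (a x) = x" if "x \<in> carrier W_D4" for x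
  proof -
    have "compose (carrier W_D4) b a x = x" using e that by simp
    then show ?thesis using that by (simp add: compose_eq)
  qed
  then show ?thesis using bc by blast
qed

lemma lt3_fwd: assumes a: "a \<in> auto W_D4" and x: "x \<in> Inv" and l: "lab x < 3" shows "lab (a x) < 3"
proof -
  have y: "MM ** x \<in> Inv" and ly: "lab (MM ** x) = lab x" using neg_Inv[OF x] l by (auto simp: negl_def)
  have "lab (a (MM ** x)) = lab (a x)" using a_lab[OF a y x ly] .
  moreover have "a (MM ** x) = MM ** a x" using a_mult[OF a MM_carrier Inv_carrier[OF x]] a_MM[OF a] by simp
  moreover have "lab (MM ** a x) = negl (lab (a x))" using neg_Inv[OF a_Inv[OF a x]] by simp
  ultimately have "negl (lab (a x)) = lab (a x)" by simp
  moreover have "lab (a x) < 5" using Inv_lab_lt[OF a_Inv[OF a x]] .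
  ultimately show ?thesis by (auto simp: negl_def split: if_splits)
qed

lemma lt3_iff: assumes a: "a \<in> auto W_D4" and x: "x \<in> Inv" shows "lab (a x) < 3 \<longleftrightarrow> lab x < 3"
proof
  assume "lab (a x) < 3"
  obtain b where b: "b \<in> auto W_D4" "\<forall>x\<in>carrier W_D4. b (a x) = x" using a_inverse[OF a] by blast
  have "lab (b (a x)) < 3" using lt3_fwd[OF b(1) a_Inv[OF a x] \<open>lab (a x) < 3\<close>] .
  then show "lab x < 3" using b(2) Inv_carrier[OF x] by simp
qed (rule lt3_fwd[OF a x])

definition phi1 :: "(real^4^4 \<Rightarrow> real^4^4) \<Rightarrow> nat \<Rightarrow> nat" where
  "phi1 a = (\<lambda>n. if n \<in> {1,2,3} then lab (a (rep (n - 1))) + 1 else n)"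
definition phi2 :: "(real^4^4 \<Rightarrow> real^4^4) \<Rightarrow> int" where
  "phi2 a = (if lab (a (rep 3)) = 3 then 0 else 1)"
definition Phi :: "(real^4^4 \<Rightarrow> real^4^4) \<Rightarrow> (nat \<Rightarrow> nat) \<times> int" where
  "Phi a = (phi1 a, phi2 a)"

lemma K1: assumes a: "a \<in> auto W_D4" and x: "x \<in> Inv" and l: "lab x < 3"
  shows "phi1 a (lab x + 1) = lab (a x) + 1"
proof -
  have r: "rep (lab x) \<in> Inv" "lab (rep (lab x)) = lab x" using rep_Inv lab_rep l by auto
  have "lab (a (rep (lab x))) = lab (a x)" using a_lab[OF a r(1) x r(2)] .
  moreover have "lab x + 1 \<in> {1,2,3}" using l by auto
  ultimately show ?thesis by (simp add: phi1_def)
qed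

lemma rep3: "rep 3 \<in> Inv" "lab (rep 3) = 3" using rep_Inv lab_rep by auto

lemma a_rep3: assumes a: "a \<in> auto W_D4" shows "lab (a (rep 3)) = 3 \<or> lab (a (rep 3)) = 4"
proof -
  have "\<not> lab (a (rep 3)) < 3" using lt3_iff[OF a rep3(1)] rep3(2) by simp
  moreover have "lab (a (rep 3)) < 5" using Inv_lab_lt[OF a_Inv[OF a rep3(1)]] .
  ultimately show ?thesis by auto
qed

lemma K3: assumes a: "a \<in> auto W_D4" and x: "x \<in> Inv" and l: "\<not> lab x < 3"
  shows "lab (a x) = (if phi2 a = 0 then lab x else negl (lab x))"
proof -
  have "lab x = 3 \<or> lab x = 4" using l Inv_lab_lt[OF x] by auto
  then show ?thesis
  proof
    assume l3: "lab x = 3"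
    have "lab (a x) = lab (a (rep 3))" using a_lab[OF a x rep3(1)] l3 rep3(2) by simp
    then show ?thesis using a_rep3[OF a] l3 by (auto simp: phi2_def negl_def)
  next
    assume l4: "lab x = 4"
    have y: "MM ** rep 3 \<in> Inv" "lab (MM ** rep 3) = 4" using neg_Inv[OF rep3(1)] rep3(2) by (auto simp: negl_def)
    have "lab (a x) = lab (a (MM ** rep 3))" using a_lab[OF a x y(1)] l4 y(2) by simp
    also have "a (MM ** rep 3) = MM ** a (rep 3)"
      using a_mult[OF a MM_carrier Inv_carrier[OF rep3(1)]] a_MM[OF a] by simp
    also have "lab (MM ** a (rep 3)) = negl (lab (a (rep 3)))" using neg_Inv[OF a_Inv[OF a rep3(1)]] by simp
    finally show ?thesis using a_rep3[OF a] l4 by (auto simp: phi2_def negl_def)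
  qed
qed

lemma phi1_perm: assumes a: "a \<in> auto W_D4" shows "phi1 a permutes {1..3}"
proof -
  have S: "{1..3} = {1,2,3::nat}" by auto
  have r: "n \<in> {1,2,3} \<Longrightarrow> rep (n - 1) \<in> Inv \<and> lab (rep (n - 1)) = n - 1" for n
    using rep_Inv lab_rep by auto
  have into: "phi1 a ` {1,2,3} \<subseteq> {1,2,3}"
  proof
    fix m assume "m \<in> phi1 a ` {1,2,3}"
    then obtain n where n: "n \<in> {1,2,3}" "m = phi1 a n" by blast
    have "lab (a (rep (n - 1))) < 3" using lt3_iff[OF a] r[OF n(1)] n(1) by auto
    then show "m \<in> {1,2,3}" using n by (auto simp: phi1_def)
  qed
  have inj: "inj_on (phi1 a) {1,2,3}"
  proof (rule inj_onI)
    fix n m assume n: "n \<in> {1,2,3}" and m: "m \<in> {1,2,3}" and e: "phi1 a n = phi1 a m"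
    then have e': "lab (a (rep (n - 1))) = lab (a (rep (m - 1)))" by (simp add: phi1_def)
    obtain b where b: "b \<in> auto W_D4" "\<forall>x\<in>carrier W_D4. b (a x) = x" using a_inverse[OF a] by blast
    have "lab (b (a (rep (n - 1)))) = lab (b (a (rep (m - 1))))"
      using a_lab[OF b(1) a_Inv[OF a] a_Inv[OF a] e'] r[OF n] r[OF m] by blast
    then have "lab (rep (n - 1)) = lab (rep (m - 1))" using b(2) Inv_carrier r[OF n] r[OF m] by simp
    then show "n = m" using r[OF n] r[OF m] n m by auto
  qed
  have "phi1 a ` {1,2,3} = {1,2,3}" using endo_inj_surj[OF _ into inj] by simp
  then have "bij_betw (phi1 a) {1,2,3} {1,2,3}" using inj by (simp add: bij_betw_def)
  moreover have "\<And>x. x \<notin> {1,2,3} \<Longrightarrow> phi1 a x = x" by (simp add: phi1_def)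
  ultimately show ?thesis unfolding S by (rule bij_imp_permutes)
qed

lemma phi2_range: "phi2 a \<in> {0, 1}" by (simp add: phi2_def)

lemma Z2_carrier: "carrier (integer_mod_group 2) = {0, 1}"
  by (auto simp: integer_mod_group_def)
lemma Z2_mult: "x \<otimes>\<^bsub>integer_mod_group 2\<^esub> y = (x + y) mod 2"
  by (simp add: integer_mod_group_def)

lemma Phi_compose: assumes a: "a \<in> auto W_D4" and b: "b \<in> auto W_D4"
  shows "Phi (compose (carrier W_D4) a b) = (phi1 a \<circ> phi1 b, (phi2 a + phi2 b) mod 2)"
proof -
  have c: "compose (carrier W_D4) a b x = a (b x)" if "x \<in> carrier W_D4" for x
    using that by (simp add: compose_eq)
  have "phi1 (compose (carrier W_D4) a b) n = (phi1 a \<circ> phi1 b) n" for n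
  proof (cases "n \<in> {1,2,3}")
    case True
    have r: "rep (n - 1) \<in> Inv" "lab (rep (n - 1)) = n - 1" using rep_Inv lab_rep True by auto
    have bx: "b (rep (n - 1)) \<in> Inv" using a_Inv[OF b r(1)] .
    have l3: "lab (b (rep (n - 1))) < 3" using lt3_iff[OF b r(1)] r(2) True by auto
    have pb: "phi1 b n = lab (b (rep (n - 1))) + 1" using True by (simp add: phi1_def)
    have "phi1 (compose (carrier W_D4) a b) n = lab (compose (carrier W_D4) a b (rep (n - 1))) + 1"
      using True by (simp add: phi1_def)
    also have "\<dots> = lab (a (b (rep (n - 1)))) + 1" using c[OF Inv_carrier[OF r(1)]] by simp
    also have "\<dots> = phi1 a (lab (b (rep (n - 1))) + 1)" using K1[OF a bx l3] by simp
    also have "\<dots> = (phi1 a \<circ> phi1 b) n" using pb by simp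
    finally show ?thesis .
  next
    case False then show ?thesis by (simp add: phi1_def)
  qed
  moreover have "phi2 (compose (carrier W_D4) a b) = (phi2 a + phi2 b) mod 2"
  proof -
    have bx: "b (rep 3) \<in> Inv" using a_Inv[OF b rep3(1)] .
    have nl: "\<not> lab (b (rep 3)) < 3" using lt3_iff[OF b rep3(1)] rep3(2) by simp
    have e1: "lab (a (b (rep 3))) = (if phi2 a = 0 then lab (b (rep 3)) else negl (lab (b (rep 3))))"
      using K3[OF a bx nl] .
    have e2: "lab (b (rep 3)) = (if phi2 b = 0 then 3 else 4)"
      using K3[OF b rep3(1)] rep3(2) by (simp add: negl_def)
    have "compose (carrier W_D4) a b (rep 3) = a (b (rep 3))" using c Inv_carrier[OF rep3(1)] by simp
    then show ?thesis using e1 e2 phi2_range[of a] phi2_range[of b]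
      by (auto simp: phi2_def negl_def split: if_splits)
  qed
  ultimately show ?thesis by (simp add: Phi_def fun_eq_iff)
qed

lemma Phi_hom: "Phi \<in> hom (AutoGroup W_D4) (DirProd (sym_group 3) (integer_mod_group 2))"
proof (rule homI)
  fix a assume "a \<in> carrier (AutoGroup W_D4)"
  then have a: "a \<in> auto W_D4" by (simp add: AG_carrier)
  show "Phi a \<in> carrier (DirProd (sym_group 3) (integer_mod_group 2))"
    using phi1_perm[OF a] phi2_range[of a] by (simp add: Phi_def sym_group_carrier Z2_carrier)
next
  fix a b assume "a \<in> carrier (AutoGroup W_D4)" "b \<in> carrier (AutoGroup W_D4)"
  then have a: "a \<in> auto W_D4" and b: "b \<in> auto W_D4" by (auto simp: AG_carrier)
  show "Phi (a \<otimes>\<^bsub>AutoGroup W_D4\<^esub> b) = Phi a \<otimes>\<^bsub>DirProd (sym_group 3) (integer_mod_group 2)\<^esub> Phi b"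
    using Phi_compose[OF a b] by (simp add: AG_mult[OF a b] Phi_def sym_group_mult Z2_mult)
qed


(* ---- a/E1.thy ---- *)


section \<open>Inner automorphisms are in the kernel\<close>

lemma conj_mult: assumes g: "g \<in> carrier W_D4" and x: "x \<in> carrier W_D4" and y: "y \<in> carrier W_D4"
  shows "g ** (x ** y) ** inv\<^bsub>W_D4\<^esub> g = (g ** x ** inv\<^bsub>W_D4\<^esub> g) ** (g ** y ** inv\<^bsub>W_D4\<^esub> g)"
proof -
  have li: "inv\<^bsub>W_D4\<^esub> g ** g = mat 1" using W.l_inv[OF g] by simp
  have "(g ** x ** inv\<^bsub>W_D4\<^esub> g) ** (g ** y ** inv\<^bsub>W_D4\<^esub> g) = g ** x ** (inv\<^bsub>W_D4\<^esub> g ** g) ** y ** inv\<^bsub>W_D4\<^esub> g"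
    by (simp only: matrix_mul_assoc)
  also have "\<dots> = g ** (x ** y) ** inv\<^bsub>W_D4\<^esub> g" unfolding li by (simp only: matrix_mul_assoc matrix_mul_rid)
  finally show ?thesis by simp
qed

lemma conj_cancel: assumes g: "g \<in> carrier W_D4"
  shows "inv\<^bsub>W_D4\<^esub> g ** (g ** x ** inv\<^bsub>W_D4\<^esub> g) ** g = x"
proof -
  have li: "inv\<^bsub>W_D4\<^esub> g ** g = mat 1" using W.l_inv[OF g] by simp
  have "inv\<^bsub>W_D4\<^esub> g ** (g ** x ** inv\<^bsub>W_D4\<^esub> g) ** g = (inv\<^bsub>W_D4\<^esub> g ** g) ** x ** (inv\<^bsub>W_D4\<^esub> g ** g)"
    by (simp only: matrix_mul_assoc)
  then show ?thesis unfolding li by simp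
qed

lemma inner_auto: assumes g: "g \<in> carrier W_D4"
  shows "(\<lambda>x\<in>carrier W_D4. g ** x ** inv\<^bsub>W_D4\<^esub> g) \<in> auto W_D4"
proof -
  let ?f = "\<lambda>x\<in>carrier W_D4. g ** x ** inv\<^bsub>W_D4\<^esub> g"
  let ?h = "\<lambda>x\<in>carrier W_D4. inv\<^bsub>W_D4\<^esub> g ** x ** g"
  have ig: "inv\<^bsub>W_D4\<^esub> g \<in> carrier W_D4" using W.inv_closed[OF g] .
  have hom: "?f \<in> hom W_D4 W_D4"
  proof (rule homI)
    fix x assume "x \<in> carrier W_D4" then show "?f x \<in> carrier W_D4" using conj_inv_carrier[OF g] by simp
  next
    fix x y assume x: "x \<in> carrier W_D4" and y: "y \<in> carrier W_D4"
    have "x ** y \<in> carrier W_D4" using W.m_closed[OF x y] by simp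
    then show "?f (x \<otimes>\<^bsub>W_D4\<^esub> y) = ?f x \<otimes>\<^bsub>W_D4\<^esub> ?f y" using conj_mult[OF g x y] x y by simp
  qed
  have hc: "inv\<^bsub>W_D4\<^esub> g ** x ** g \<in> carrier W_D4" if "x \<in> carrier W_D4" for x
    using conj_inv_carrier[OF ig that] W.inv_inv[OF g] by simp
  have "bij_betw ?f (carrier W_D4) (carrier W_D4)"
  proof (rule bij_betw_byWitness[where f' = ?h])
    show "\<forall>x\<in>carrier W_D4. ?h (?f x) = x" using conj_cancel[OF g] conj_inv_carrier[OF g] by simp
    show "\<forall>x\<in>carrier W_D4. ?f (?h x) = x" using conj_cancel[OF ig] hc W.inv_inv[OF g] by simp
    show "?f ` carrier W_D4 \<subseteq> carrier W_D4" using conj_inv_carrier[OF g] by auto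
    show "?h ` carrier W_D4 \<subseteq> carrier W_D4" using hc by auto
  qed
  then show ?thesis using hom by (simp add: auto_def Bij_def)
qed

lemma S3_one: "\<one>\<^bsub>sym_group 3\<^esub> = id" by (simp add: sym_group_one)
lemma Z2_one: "\<one>\<^bsub>integer_mod_group 2\<^esub> = 0" by (simp add: integer_mod_group_def)

lemma inner_kernel: assumes g: "g \<in> carrier W_D4"
  shows "Phi (\<lambda>x\<in>carrier W_D4. g ** x ** inv\<^bsub>W_D4\<^esub> g) = (id, 0)"
proof -
  let ?f = "\<lambda>x\<in>carrier W_D4. g ** x ** inv\<^bsub>W_D4\<^esub> g"
  have l: "lab (?f x) = lab x" if "x \<in> Inv" for x
    using conj_lab[OF g] that Inv_carrier[OF that] by simp
  have "phi1 ?f n = id n" for n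
  proof (cases "n \<in> {1,2,3}")
    case True
    have "rep (n - 1) \<in> Inv" "lab (rep (n - 1)) = n - 1" using rep_Inv lab_rep True by auto
    then show ?thesis using True l by (auto simp: phi1_def)
  qed (simp add: phi1_def)
  moreover have "phi2 ?f = 0" using l[OF rep3(1)] rep3(2) by (simp add: phi2_def)
  ultimately show ?thesis by (simp add: Phi_def fun_eq_iff)
qed

section \<open>Automorphisms in the kernel are inner\<close>

definition good :: "(real^4^4 \<Rightarrow> real^4^4) \<Rightarrow> bool" where
  "good f \<longleftrightarrow> f \<in> hom W_D4 W_D4 \<and> inj_on f (carrier W_D4) \<and> (\<forall>x\<in>Inv. f x \<in> Inv \<and> lab (f x) = lab x)"

definition cf :: "real^4^4 \<Rightarrow> (real^4^4 \<Rightarrow> real^4^4) \<Rightarrow> real^4^4 \<Rightarrow> real^4^4" where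
  "cf g f = (\<lambda>x. g ** f x ** inv\<^bsub>W_D4\<^esub> g)"

lemma good_carrier: "good f \<Longrightarrow> x \<in> carrier W_D4 \<Longrightarrow> f x \<in> carrier W_D4"
  by (auto simp: good_def hom_def)
lemma good_mult: "good f \<Longrightarrow> x \<in> carrier W_D4 \<Longrightarrow> y \<in> carrier W_D4 \<Longrightarrow> f (x ** y) = f x ** f y"
  by (auto simp: good_def hom_def)

lemma good_cf: assumes f: "good f" and g: "g \<in> carrier W_D4" shows "good (cf g f)"
proof -
  have hom: "cf g f \<in> hom W_D4 W_D4"
  proof (rule homI)
    fix x assume "x \<in> carrier W_D4" then show "cf g f x \<in> carrier W_D4"
      using conj_inv_carrier[OF g good_carrier[OF f]] by (simp add: cf_def)
  next
    fix x y assume x: "x \<in> carrier W_D4" and y: "y \<in> carrier W_D4"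
    show "cf g f (x \<otimes>\<^bsub>W_D4\<^esub> y) = cf g f x \<otimes>\<^bsub>W_D4\<^esub> cf g f y"
      using conj_mult[OF g good_carrier[OF f x] good_carrier[OF f y]] good_mult[OF f x y] by (simp add: cf_def)
  qed
  have inj: "inj_on (cf g f) (carrier W_D4)"
  proof (rule inj_onI)
    fix x y assume x: "x \<in> carrier W_D4" and y: "y \<in> carrier W_D4" and e: "cf g f x = cf g f y"
    have e': "g ** f x ** inv\<^bsub>W_D4\<^esub> g = g ** f y ** inv\<^bsub>W_D4\<^esub> g" using e by (simp add: cf_def)
    have "f x = inv\<^bsub>W_D4\<^esub> g ** (g ** f x ** inv\<^bsub>W_D4\<^esub> g) ** g" using conj_cancel[OF g, of "f x"] by simp
    also have "\<dots> = inv\<^bsub>W_D4\<^esub> g ** (g ** f y ** inv\<^bsub>W_D4\<^esub> g) ** g" unfolding e' ..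
    also have "\<dots> = f y" using conj_cancel[OF g, of "f y"] by simp
    finally have "f x = f y" .
    moreover have "inj_on f (carrier W_D4)" using f by (simp add: good_def)
    ultimately show "x = y" using x y by (meson inj_onD)
  qed
  have "\<forall>x\<in>Inv. cf g f x \<in> Inv \<and> lab (cf g f x) = lab x"
  proof
    fix x assume x: "x \<in> Inv"
    have fx: "f x \<in> Inv" "lab (f x) = lab x" using f x by (auto simp: good_def)
    have "g ** f x ** inv\<^bsub>W_D4\<^esub> g \<in> Inv \<and> lab (g ** f x ** inv\<^bsub>W_D4\<^esub> g) = lab (f x)"
      using conj_lab[OF g] fx(1) by blast
    then show "cf g f x \<in> Inv \<and> lab (cf g f x) = lab x" using fx(2) by (simp add: cf_def)
  qed
  then show ?thesis using hom inj unfolding good_def by blast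
qed

lemma good_fix: assumes f: "good f" and fx: "\<And>i. i < 4 \<Longrightarrow> f (gm i) = gm i" and x: "x \<in> carrier W_D4"
  shows "f x = x"
  using x
proof (induction x rule: gen_induct')
  case one
  have "group_hom W_D4 W_D4 f" using f group_W by (simp add: good_def group_hom_def group_hom_axioms_def)
  then show ?case using group_hom.hom_one by fastforce
next
  case (step y i)
  then show ?case using good_mult[OF f step(1) gm_carrier[OF \<open>i < 4\<close>]] fx[OF \<open>i < 4\<close>] by simp
qed

definition WIT2 :: "el list" where "WIT2 = [([1,1,1,1],[3,1,2,0]), ([1,-1,-1,1],[3,1,2,0]), ([1,1,1,1],[3,2,1,0]), ([1,-1,-1,1],[3,2,1,0]), ([1,1,1,1],[0,2,1,3]), ([1,-1,-1,1],[0,2,1,3]), ([1,1,1,1],[0,1,2,3]), ([1,-1,-1,1],[0,1,2,3])]"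
definition cube :: "el \<Rightarrow> el" where "cube w = lmul w (lmul w w)"

lemma comp2: "list_all (\<lambda>v. (llab v = 3 \<and> cube (lmul v (G!1)) = I \<and> v \<noteq> G!1) \<longrightarrow>
   list_ex (\<lambda>g. inL g \<and> lmul g (G!1) = lmul (G!1) g \<and> lmul g v = lmul (G!0) g) WIT2) InvL" by code_simp
lemma comp3: "list_all (\<lambda>v. (llab v = 3 \<and> cube (lmul v (G!1)) = I \<and> lmul v (G!0) = lmul (G!0) v \<and> v \<noteq> G!0
   \<and> lmul v (G!0) \<in> set InvL \<and> llab (lmul v (G!0)) = 1) \<longrightarrow> v = G!2) InvL" by code_simp
lemma comp4: "list_all (\<lambda>v. (llab v = 3 \<and> cube (lmul v (G!1)) = I \<and> lmul v (G!0) = lmul (G!0) v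
   \<and> lmul v (G!2) = lmul (G!2) v \<and> v \<noteq> G!0 \<and> v \<noteq> G!2
   \<and> lmul v (G!0) \<in> set InvL \<and> llab (lmul v (G!0)) = 2 \<and> lmul v (G!2) \<in> set InvL \<and> llab (lmul v (G!2)) = 0)
   \<longrightarrow> v = G!3) InvL" by code_simp
lemma comp_facts: "list_all (\<lambda>i. G!i \<in> set InvL \<and> llab (G!i) = 3 \<and> cube (lmul (G!i) (G!1)) = I) [0,2,3]
  \<and> lmul (G!2) (G!0) = lmul (G!0) (G!2) \<and> lmul (G!3) (G!0) = lmul (G!0) (G!3) \<and> lmul (G!3) (G!2) = lmul (G!2) (G!3)
  \<and> lmul (G!2) (G!0) \<in> set InvL \<and> llab (lmul (G!2) (G!0)) = 1
  \<and> lmul (G!3) (G!0) \<in> set InvL \<and> llab (lmul (G!3) (G!0)) = 2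
  \<and> lmul (G!3) (G!2) \<in> set InvL \<and> llab (lmul (G!3) (G!2)) = 0
  \<and> G!1 \<in> set InvL \<and> llab (G!1) = 3" by code_simp


(* ---- a/F1.thy ---- *)


lemma comm_conj: "g \<in> carrier W_D4 \<Longrightarrow> g ** a = b ** g \<Longrightarrow> g ** a ** inv\<^bsub>W_D4\<^esub> g = b"
proof -
  assume g: "g \<in> carrier W_D4" and e: "g ** a = b ** g"
  have "g ** a ** inv\<^bsub>W_D4\<^esub> g = b ** g ** inv\<^bsub>W_D4\<^esub> g" using e by simp
  also have "\<dots> = b" using W.r_inv[OF g] by (simp add: matrix_mul_assoc[symmetric])
  finally show ?thesis .
qed

lemma gmL: "i < 4 \<Longrightarrow> G ! i \<in> set L" by (rule G_L')

lemma dec_Inv: "v \<in> set L \<Longrightarrow> dec v \<in> Inv \<Longrightarrow> v \<in> set InvL"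
proof -
  assume v: "v \<in> set L" and d: "dec v \<in> Inv"
  then obtain w where w: "w \<in> set InvL" "dec v = dec w" by (auto simp: Inv_eq)
  then have "v = w" using dec_eq_iff[OF v InvL_L'[OF w(1)]] by simp
  then show ?thesis using w by simp
qed

lemma gm_Inv: "i < 4 \<Longrightarrow> i \<noteq> 1 \<Longrightarrow> gm i \<in> Inv \<and> lab (gm i) = 3"
proof -
  assume "i < 4" "i \<noteq> 1"
  then have "i = 0 \<or> i = 2 \<or> i = 3" by auto
  then have "G!i \<in> set InvL \<and> llab (G!i) = 3" using comp_facts by auto
  then show ?thesis by (simp add: gm_dec Inv_eq lab_dec)
qed
lemma gm1_Inv: "gm 1 \<in> Inv \<and> lab (gm 1) = 3"
  using comp_facts by (simp add: gm_dec Inv_eq lab_dec)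

lemma good_Inv: "good f \<Longrightarrow> x \<in> Inv \<Longrightarrow> f x \<in> Inv \<and> lab (f x) = lab x"
  by (simp add: good_def)

lemma good_one: "good f \<Longrightarrow> f (mat 1) = mat 1"
proof -
  assume f: "good f"
  have "group_hom W_D4 W_D4 f" using f group_W by (simp add: good_def group_hom_def group_hom_axioms_def)
  then show ?thesis using group_hom.hom_one by fastforce
qed

lemma good_img: assumes f: "good f" and i: "i < 4" and i1: "i \<noteq> 1"
  shows "\<exists>v. v \<in> set InvL \<and> f (gm i) = dec v \<and> llab v = 3"
proof -
  have "f (gm i) \<in> Inv" "lab (f (gm i)) = 3" using good_Inv[OF f] gm_Inv[OF i i1] by auto
  then obtain v where v: "v \<in> set InvL" "f (gm i) = dec v" by (auto simp: Inv_eq)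
  have "llab v = 3" using lab_dec[OF v(1)] \<open>lab (f (gm i)) = 3\<close> v(2) by simp
  then show ?thesis using v by blast
qed

lemma fprod: assumes f: "good f" and i: "i < 4" and j: "j < 4" and v: "v \<in> set L" and fi: "f (gm i) = dec v"
  and fj: "f (gm j) = gm j"
  shows "f (gm i ** gm j) = dec (lmul v (G!j))"
  using good_mult[OF f gm_carrier[OF i] gm_carrier[OF j]] fi fj v gmL[OF j] by (simp add: gm_dec decmul)

lemma fcube: assumes f: "good f" and i: "i < 4" and v: "v \<in> set L" and fi: "f (gm i) = dec v"
  and f1: "f (gm 1) = gm 1" and c: "cube (lmul (G!i) (G!1)) = I"
  shows "cube (lmul v (G!1)) = I"
proof -
  define w0 where "w0 = lmul (G!i) (G!1)"
  define w where "w = lmul v (G!1)"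
  have w0L: "w0 \<in> set L" using lmul_L gmL i by (simp add: w0_def)
  have wL: "w \<in> set L" using lmul_L gmL v by (simp add: w_def)
  have dw0: "dec w0 = gm i ** gm 1" using gmL[OF i] gmL[of 1] by (simp add: gm_dec decmul w0_def)
  have fw0: "f (dec w0) = dec w" using fprod[OF f i _ v fi f1] dw0 by (simp add: w_def)
  have w0c: "dec w0 \<in> carrier W_D4" using dec_L_carrier[OF w0L] .
  have "dec w0 ** (dec w0 ** dec w0) = dec (cube w0)"
    using w0L lmul_L by (simp add: decmul cube_def)
  moreover have "cube w0 = I" using c by (simp add: w0_def)
  ultimately have "dec w0 ** (dec w0 ** dec w0) = mat 1" by (simp add: dec_I)
  then have "f (dec w0 ** (dec w0 ** dec w0)) = mat 1" using good_one[OF f] by simp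
  moreover have "f (dec w0 ** (dec w0 ** dec w0)) = dec w ** (dec w ** dec w)"
    using good_mult[OF f w0c W.m_closed[OF w0c w0c, simplified]] good_mult[OF f w0c w0c] fw0 by simp
  ultimately have "dec (cube w) = dec I" using wL lmul_L by (simp add: decmul cube_def dec_I)
  then have "cube w = I" using dec_eq_iff[OF _ I_L'] lmul_L wL by (simp add: cube_def)
  then show ?thesis by (simp add: w_def)
qed

lemma fcomm: assumes f: "good f" and i: "i < 4" and j: "j < 4" and v: "v \<in> set L" and fi: "f (gm i) = dec v"
  and fj: "f (gm j) = gm j" and c: "lmul (G!i) (G!j) = lmul (G!j) (G!i)"
  shows "lmul v (G!j) = lmul (G!j) v"
proof -
  have "gm i ** gm j = gm j ** gm i" using c gmL i j by (simp add: gm_dec decmul)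
  then have "f (gm i ** gm j) = f (gm j ** gm i)" by simp
  moreover have "f (gm j ** gm i) = gm j ** dec v"
    using good_mult[OF f gm_carrier[OF j] gm_carrier[OF i]] fi fj by simp
  ultimately have "dec (lmul v (G!j)) = dec (lmul (G!j) v)"
    using fprod[OF f i j v fi fj] gmL[OF j] v by (simp add: gm_dec decmul)
  then show ?thesis using dec_eq_iff lmul_L gmL[OF j] v by blast
qed

lemma flab: assumes f: "good f" and i: "i < 4" and j: "j < 4" and v: "v \<in> set L" and fi: "f (gm i) = dec v"
  and fj: "f (gm j) = gm j" and m: "lmul (G!i) (G!j) \<in> set InvL" and k: "llab (lmul (G!i) (G!j)) = k"
  shows "lmul v (G!j) \<in> set InvL \<and> llab (lmul v (G!j)) = k"
proof -
  have x: "gm i ** gm j \<in> Inv" "lab (gm i ** gm j) = k"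
    using m k gmL i j by (auto simp: gm_dec decmul Inv_eq lab_dec)
  have "dec (lmul v (G!j)) \<in> Inv" "lab (dec (lmul v (G!j))) = k"
    using good_Inv[OF f x(1)] x(2) fprod[OF f i j v fi fj] by auto
  moreover have "lmul v (G!j) \<in> set InvL" using dec_Inv lmul_L v gmL[OF j] calculation(1) by blast
  ultimately show ?thesis using lab_dec by auto
qed

lemma fneq: assumes f: "good f" and i: "i < 4" and j: "j < 4" and fi: "f (gm i) = dec v"
  and fj: "f (gm j) = gm j" and ne: "G!i \<noteq> G!j"
  shows "v \<noteq> G!j"
proof
  assume "v = G!j"
  then have "f (gm i) = f (gm j)" using fi fj by (simp add: gm_dec)
  then have "gm i = gm j" using f gm_carrier[OF i] gm_carrier[OF j] by (auto simp: good_def inj_on_def)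
  then show False using ne dec_eq_iff gmL i j by (simp add: gm_dec)
qed


lemma G01: "G!0 \<noteq> G!1" "G!2 \<noteq> G!0" "G!3 \<noteq> G!0" "G!3 \<noteq> G!2" by (simp_all add: G_def)

lemma chain1: assumes f: "good f" shows "\<exists>g\<in>carrier W_D4. cf g f (gm 1) = gm 1"
proof -
  have x: "f (gm 1) \<in> Inv" "lab (f (gm 1)) = 3" using good_Inv[OF f] gm1_Inv by auto
  obtain g where "g \<in> carrier W_D4" "g ** f (gm 1) ** inv\<^bsub>W_D4\<^esub> g = gm 1"
    using cj_iff[OF x(1)] gm1_Inv x(2) by auto
  then show ?thesis by (auto simp: cf_def)
qed

lemma chain2: assumes f: "good f" and f1: "f (gm 1) = gm 1"
  shows "\<exists>g\<in>carrier W_D4. cf g f (gm 1) = gm 1 \<and> cf g f (gm 0) = gm 0"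
proof -
  obtain v where v: "v \<in> set InvL" "f (gm 0) = dec v" "llab v = 3" using good_img[OF f, of 0] by auto
  have vL: "v \<in> set L" using InvL_L' v(1) .
  have c: "cube (lmul v (G!1)) = I" using fcube[OF f _ vL v(2) f1] comp_facts by simp
  have n: "v \<noteq> G!1" using fneq[OF f _ _ v(2) f1] G01 by simp
  obtain g where g: "g \<in> set WIT2" "inL g" "lmul g (G!1) = lmul (G!1) g" "lmul g v = lmul (G!0) g"
    using comp2 v(1) v(3) c n by (auto simp: list_all_iff list_ex_iff)
  have gL: "g \<in> set L" using g(2) inL_iff by blast
  have gc: "dec g \<in> carrier W_D4" using dec_L_carrier[OF gL] .
  have "dec g ** gm 1 = gm 1 ** dec g" using g(3) gL gmL[of 1] by (simp add: gm_dec decmul)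
  then have a: "cf (dec g) f (gm 1) = gm 1" using comm_conj[OF gc] f1 by (simp add: cf_def)
  have "dec g ** f (gm 0) = gm 0 ** dec g" using g(4) gL gmL[of 0] v(2) vL by (simp add: gm_dec decmul)
  then have b: "cf (dec g) f (gm 0) = gm 0" using comm_conj[OF gc] by (simp add: cf_def)
  show ?thesis using a b gc by blast
qed

lemma chain3: assumes f: "good f" and f1: "f (gm 1) = gm 1" and f0: "f (gm 0) = gm 0"
  shows "f (gm 2) = gm 2"
proof -
  obtain v where v: "v \<in> set InvL" "f (gm 2) = dec v" "llab v = 3" using good_img[OF f, of 2] by auto
  have vL: "v \<in> set L" using InvL_L' v(1) .
  have c: "cube (lmul v (G!1)) = I" using fcube[OF f _ vL v(2) f1] comp_facts by simp
  have cm: "lmul v (G!0) = lmul (G!0) v" using fcomm[OF f _ _ vL v(2) f0] comp_facts by simp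
  have n: "v \<noteq> G!0" using fneq[OF f _ _ v(2) f0] G01 by simp
  have m: "lmul (G!2) (G!0) \<in> set InvL" "llab (lmul (G!2) (G!0)) = 1" using comp_facts by blast+
  have l: "lmul v (G!0) \<in> set InvL \<and> llab (lmul v (G!0)) = 1" using flab[OF f _ _ vL v(2) f0 m] by simp
  have "v = G!2" using comp3 v(1) v(3) c cm n l by (auto simp: list_all_iff)
  then show ?thesis using v(2) by (simp add: gm_dec)
qed

lemma chain4: assumes f: "good f" and f1: "f (gm 1) = gm 1" and f0: "f (gm 0) = gm 0" and f2: "f (gm 2) = gm 2"
  shows "f (gm 3) = gm 3"
proof -
  obtain v where v: "v \<in> set InvL" "f (gm 3) = dec v" "llab v = 3" using good_img[OF f, of 3] by auto
  have vL: "v \<in> set L" using InvL_L' v(1) .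
  have c: "cube (lmul v (G!1)) = I" using fcube[OF f _ vL v(2) f1] comp_facts by simp
  have cm0: "lmul v (G!0) = lmul (G!0) v" using fcomm[OF f _ _ vL v(2) f0] comp_facts by simp
  have cm2: "lmul v (G!2) = lmul (G!2) v" using fcomm[OF f _ _ vL v(2) f2] comp_facts by simp
  have n0: "v \<noteq> G!0" using fneq[OF f _ _ v(2) f0] G01 by simp
  have n2: "v \<noteq> G!2" using fneq[OF f _ _ v(2) f2] G01 by simp
  have m0: "lmul (G!3) (G!0) \<in> set InvL" "llab (lmul (G!3) (G!0)) = 2" using comp_facts by blast+
  have m2: "lmul (G!3) (G!2) \<in> set InvL" "llab (lmul (G!3) (G!2)) = 0" using comp_facts by blast+
  have l0: "lmul v (G!0) \<in> set InvL \<and> llab (lmul v (G!0)) = 2" using flab[OF f _ _ vL v(2) f0 m0] by simp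
  have l2: "lmul v (G!2) \<in> set InvL \<and> llab (lmul v (G!2)) = 0" using flab[OF f _ _ vL v(2) f2 m2] by simp
  have "v = G!3" using comp4 v(1) v(3) c cm0 cm2 n0 n2 l0 l2 by (auto simp: list_all_iff)
  then show ?thesis using v(2) by (simp add: gm_dec)
qed

lemma good_inner: assumes f: "good f"
  shows "\<exists>k\<in>carrier W_D4. \<forall>x\<in>carrier W_D4. f x = k ** x ** inv\<^bsub>W_D4\<^esub> k"
proof -
  obtain g1 where g1: "g1 \<in> carrier W_D4" "cf g1 f (gm 1) = gm 1" using chain1[OF f] by blast
  have f1: "good (cf g1 f)" using good_cf[OF f g1(1)] .
  obtain g2 where g2: "g2 \<in> carrier W_D4" "cf g2 (cf g1 f) (gm 1) = gm 1" "cf g2 (cf g1 f) (gm 0) = gm 0"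
    using chain2[OF f1 g1(2)] by blast
  define f2 where "f2 = cf g2 (cf g1 f)"
  have f2g: "good f2" using good_cf[OF f1 g2(1)] by (simp add: f2_def)
  have a1: "f2 (gm 1) = gm 1" and a0: "f2 (gm 0) = gm 0" using g2 by (simp_all add: f2_def)
  have a2: "f2 (gm 2) = gm 2" using chain3[OF f2g a1 a0] .
  have a3: "f2 (gm 3) = gm 3" using chain4[OF f2g a1 a0 a2] .
  have fx: "f2 (gm i) = gm i" if "i < 4" for i
    using that a0 a1 a2 a3 four_cases[of i] by auto
  define k where "k = inv\<^bsub>W_D4\<^esub> g1 ** inv\<^bsub>W_D4\<^esub> g2"
  have ig1: "inv\<^bsub>W_D4\<^esub> g1 \<in> carrier W_D4" and ig2: "inv\<^bsub>W_D4\<^esub> g2 \<in> carrier W_D4"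
    using W.inv_closed g1(1) g2(1) by auto
  have kc: "k \<in> carrier W_D4" using W.m_closed[OF ig1 ig2] by (simp add: k_def)
  have ik: "inv\<^bsub>W_D4\<^esub> k = g2 ** g1"
    using W.inv_mult_group[OF ig1 ig2] W.inv_inv[OF g1(1)] W.inv_inv[OF g2(1)] by (simp add: k_def)
  have "f x = k ** x ** inv\<^bsub>W_D4\<^esub> k" if x: "x \<in> carrier W_D4" for x
  proof -
    have e: "g2 ** (g1 ** f x ** inv\<^bsub>W_D4\<^esub> g1) ** inv\<^bsub>W_D4\<^esub> g2 = x"
      using good_fix[OF f2g fx x] by (simp add: f2_def cf_def)
    have "f x = inv\<^bsub>W_D4\<^esub> g1 ** (g1 ** f x ** inv\<^bsub>W_D4\<^esub> g1) ** g1" using conj_cancel[OF g1(1)] by simp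
    also have "g1 ** f x ** inv\<^bsub>W_D4\<^esub> g1 = inv\<^bsub>W_D4\<^esub> g2 ** x ** g2"
      using conj_cancel[OF g2(1), of "g1 ** f x ** inv\<^bsub>W_D4\<^esub> g1"] e by simp
    also have "inv\<^bsub>W_D4\<^esub> g1 ** (inv\<^bsub>W_D4\<^esub> g2 ** x ** g2) ** g1 = k ** x ** inv\<^bsub>W_D4\<^esub> k"
      unfolding ik unfolding k_def by (simp only: matrix_mul_assoc)
    finally show ?thesis .
  qed
  then show ?thesis using kc by blast
qed

lemma kernel_inner: assumes a: "a \<in> auto W_D4" and P: "Phi a = (id, 0)"
  shows "a \<in> Inn W_D4"
proof -
  have p1: "phi1 a = id" and p2: "phi2 a = 0" using P by (auto simp: Phi_def)
  have lab: "lab (a x) = lab x" if x: "x \<in> Inv" for x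
  proof (cases "lab x < 3")
    case True
    then show ?thesis using K1[OF a x True] p1 by simp
  next
    case False
    then show ?thesis using K3[OF a x False] p2 by simp
  qed
  have "good a" unfolding good_def
    using a a_Inv[OF a] lab a_bij[OF a] by (auto simp: auto_def bij_betw_def)
  then obtain k where k: "k \<in> carrier W_D4" "\<forall>x\<in>carrier W_D4. a x = k ** x ** inv\<^bsub>W_D4\<^esub> k"
    using good_inner by blast
  have ext: "a \<in> extensional (carrier W_D4)" using a by (simp add: auto_def Bij_def)
  have "a = (\<lambda>x\<in>carrier W_D4. k ** x ** inv\<^bsub>W_D4\<^esub> k)"
  proof
    fix x show "a x = (\<lambda>x\<in>carrier W_D4. k ** x ** inv\<^bsub>W_D4\<^esub> k) x"
      using k(2) ext by (cases "x \<in> carrier W_D4") (auto simp: extensional_def)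
  qed
  then show ?thesis using k(1) unfolding Inn_def by auto
qed

lemma kernel_eq: "kernel (AutoGroup W_D4) (DirProd (sym_group 3) (integer_mod_group 2)) Phi = Inn W_D4"
proof
  show "kernel (AutoGroup W_D4) (DirProd (sym_group 3) (integer_mod_group 2)) Phi \<subseteq> Inn W_D4"
    using kernel_inner by (auto simp: kernel_def AG_carrier S3_one Z2_one)
next
  show "Inn W_D4 \<subseteq> kernel (AutoGroup W_D4) (DirProd (sym_group 3) (integer_mod_group 2)) Phi"
    using inner_auto inner_kernel by (auto simp: kernel_def AG_carrier S3_one Z2_one Inn_def)
qed


(* ---- a/G1.thy ---- *)


definition h14 :: "real^4^4" where
  "h14 = (\<chi> i j. if i = 1 \<or> j = 1 \<or> i = j then 1/2 else -1/2)"
definition h34 :: "real^4^4" where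
  "h34 = (\<chi> i j. if i = j then (if i = 4 then -1 else 1) else 0)"

lemma gm_entries: "gm i $ a $ b = (let v = G ! i in if pos a = snd v ! pos b then real_of_int (fst v ! pos b) else 0)"
  by (simp add: gm_dec dec_entry Let_def)

lemma h14_sq: "h14 ** h14 = mat 1"
  unfolding vec_eq_iff forall_4 by (simp add: matrix_matrix_mult_def sum_4 h14_def mat_def)
lemma h34_sq: "h34 ** h34 = mat 1"
  unfolding vec_eq_iff forall_4 by (simp add: matrix_matrix_mult_def sum_4 h34_def mat_def)

lemma h14_gm: "h14 ** gm 0 ** h14 = gm 3" "h14 ** gm 1 ** h14 = gm 1" "h14 ** gm 2 ** h14 = gm 2" "h14 ** gm 3 ** h14 = gm 0"
  unfolding vec_eq_iff forall_4 by (simp_all add: matrix_matrix_mult_def sum_4 h14_def gm_entries G_def pos_def)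
lemma h34_gm: "h34 ** gm 0 ** h34 = gm 0" "h34 ** gm 1 ** h34 = gm 1" "h34 ** gm 2 ** h34 = gm 3" "h34 ** gm 3 ** h34 = gm 2"
  unfolding vec_eq_iff forall_4 by (simp_all add: matrix_matrix_mult_def sum_4 h34_def gm_entries G_def pos_def)

definition hconj :: "real^4^4 \<Rightarrow> real^4^4 \<Rightarrow> real^4^4" where
  "hconj h = (\<lambda>x\<in>carrier W_D4. h ** x ** h)"

lemma hmul: "h ** h = mat 1 \<Longrightarrow> (h ** x ** h) ** (h ** y ** h) = h ** (x ** y) ** h"
proof -
  assume hh: "h ** h = mat 1"
  have "(h ** x ** h) ** (h ** y ** h) = h ** x ** (h ** h) ** y ** h" by (simp only: matrix_mul_assoc)
  then show ?thesis unfolding hh by (simp add: matrix_mul_assoc)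
qed

lemma hinvol: "h ** h = mat 1 \<Longrightarrow> h ** (h ** x ** h) ** h = x"
proof -
  assume hh: "h ** h = mat 1"
  have "h ** (h ** x ** h) ** h = (h ** h) ** x ** (h ** h)" by (simp only: matrix_mul_assoc)
  then show ?thesis unfolding hh by simp
qed

lemma hconj_auto: assumes hh: "h ** h = mat 1" and hg: "\<And>i. i < 4 \<Longrightarrow> h ** gm i ** h \<in> carrier W_D4"
  shows "hconj h \<in> auto W_D4"
proof -
  have cl: "h ** x ** h \<in> carrier W_D4" if x: "x \<in> carrier W_D4" for x
    using x
  proof (induction x rule: gen_induct')
    case one then show ?case using hh W.one_closed by simp
  next
    case (step y i)
    have "h ** (y ** gm i) ** h = (h ** y ** h) ** (h ** gm i ** h)" using hmul[OF hh] by simp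
    then show ?case using W.m_closed[OF step(3) hg[OF \<open>i < 4\<close>]] by simp
  qed
  have hom: "hconj h \<in> hom W_D4 W_D4"
  proof (rule homI)
    fix x assume "x \<in> carrier W_D4" then show "hconj h x \<in> carrier W_D4" using cl by (simp add: hconj_def)
  next
    fix x y assume x: "x \<in> carrier W_D4" and y: "y \<in> carrier W_D4"
    have "x ** y \<in> carrier W_D4" using W.m_closed[OF x y] by simp
    then show "hconj h (x \<otimes>\<^bsub>W_D4\<^esub> y) = hconj h x \<otimes>\<^bsub>W_D4\<^esub> hconj h y"
      using x y hmul[OF hh] by (simp add: hconj_def)
  qed
  have "bij_betw (hconj h) (carrier W_D4) (carrier W_D4)"
  proof (rule bij_betw_byWitness[where f' = "hconj h"])
    show "\<forall>x\<in>carrier W_D4. hconj h (hconj h x) = x" using cl hinvol[OF hh] by (simp add: hconj_def)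
    then show "\<forall>x\<in>carrier W_D4. hconj h (hconj h x) = x" .
    show "hconj h ` carrier W_D4 \<subseteq> carrier W_D4" using cl by (auto simp: hconj_def)
    then show "hconj h ` carrier W_D4 \<subseteq> carrier W_D4" .
  qed
  then show ?thesis using hom by (simp add: auto_def Bij_def hconj_def)
qed

lemma c14_auto: "hconj h14 \<in> auto W_D4"
proof (rule hconj_auto[OF h14_sq])
  fix i :: nat assume "i < 4"
  then show "h14 ** gm i ** h14 \<in> carrier W_D4" using four_cases[of i] h14_gm gm_carrier by auto
qed
lemma c34_auto: "hconj h34 \<in> auto W_D4"
proof (rule hconj_auto[OF h34_sq])
  fix i :: nat assume "i < 4"
  then show "h34 ** gm i ** h34 \<in> carrier W_D4" using four_cases[of i] h34_gm gm_carrier by auto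
qed

lemma REPS_gm: "REPS ! 0 = lmul (G!2) (G!3) \<and> REPS ! 1 = lmul (G!0) (G!2) \<and> REPS ! 2 = lmul (G!0) (G!3) \<and> REPS ! 3 = G!0"
  by code_simp
lemma rep_gm: "rep 0 = gm 2 ** gm 3" "rep 1 = gm 0 ** gm 2" "rep 2 = gm 0 ** gm 3" "rep 3 = gm 0"
  using REPS_gm gmL by (simp_all add: rep_def gm_dec decmul)

lemma rep_gm1: "rep (Suc 0) = gm 0 ** gm 2" using rep_gm(2) by simp

lemma prod_labs: "list_all (\<lambda>(a,b,k). lmul (G!a) (G!b) \<in> set InvL \<and> llab (lmul (G!a) (G!b)) = k)
   [(3,2,0),(0,3,2),(0,2,1),(2,0,1),(3,0,2)]" by code_simp

lemma lab_gm2: "a < 4 \<Longrightarrow> b < 4 \<Longrightarrow> lmul (G!a) (G!b) \<in> set InvL \<Longrightarrow> lab (gm a ** gm b) = llab (lmul (G!a) (G!b))"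
  using gmL by (simp add: gm_dec decmul lab_dec)

lemma labs: "lab (gm 3 ** gm 2) = 0" "lab (gm 0 ** gm 3) = 2" "lab (gm 0 ** gm 2) = 1"
  "lab (gm 2 ** gm 0) = 1" "lab (gm 3 ** gm 0) = 2" "lab (gm 0) = 3" "lab (gm 3) = 3"
  using prod_labs lab_gm2 gm_Inv by auto

lemma gm2_carrier: "a < 4 \<Longrightarrow> b < 4 \<Longrightarrow> gm a ** gm b \<in> carrier W_D4"
  using W.m_closed[OF gm_carrier gm_carrier] by simp

lemma hc_prod: "h ** h = mat 1 \<Longrightarrow> a < 4 \<Longrightarrow> b < 4 \<Longrightarrow> hconj h (gm a ** gm b) = (h ** gm a ** h) ** (h ** gm b ** h)"
  using gm2_carrier hmul[of h "gm a" "gm b"] by (simp add: hconj_def)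
lemma hc_gm: "a < 4 \<Longrightarrow> hconj h (gm a) = h ** gm a ** h"
  using gm_carrier by (simp add: hconj_def)

lemma Phi_c34: "Phi (hconj h34) = (Transposition.transpose 2 3, 0)"
proof -
  have r: "hconj h34 (rep 0) = gm 3 ** gm 2" "hconj h34 (rep 1) = gm 0 ** gm 3"
    "hconj h34 (rep 2) = gm 0 ** gm 2" "hconj h34 (rep 3) = gm 0"
    by (simp_all add: rep_gm rep_gm1 hc_prod[OF h34_sq] hc_gm h34_gm)
  have "phi1 (hconj h34) = Transposition.transpose 2 3"
  proof
    fix n show "phi1 (hconj h34) n = Transposition.transpose 2 3 n"
      by (cases "n = 1"; cases "n = 2"; cases "n = 3") (simp_all add: phi1_def r r[simplified] labs Transposition.transpose_def)
  qed
  moreover have "phi2 (hconj h34) = 0" by (simp add: phi2_def r labs)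
  ultimately show ?thesis by (simp add: Phi_def)
qed

lemma Phi_c14: "Phi (hconj h14) = (Transposition.transpose 1 2, 0)"
proof -
  have r: "hconj h14 (rep 0) = gm 2 ** gm 0" "hconj h14 (rep 1) = gm 3 ** gm 2"
    "hconj h14 (rep 2) = gm 3 ** gm 0" "hconj h14 (rep 3) = gm 3"
    by (simp_all add: rep_gm rep_gm1 hc_prod[OF h14_sq] hc_gm h14_gm)
  have "phi1 (hconj h14) = Transposition.transpose 1 2"
  proof
    fix n show "phi1 (hconj h14) n = Transposition.transpose 1 2 n"
      by (cases "n = 1"; cases "n = 2"; cases "n = 3") (simp_all add: phi1_def r r[simplified] labs Transposition.transpose_def)
  qed
  moreover have "phi2 (hconj h14) = 0" by (simp add: phi2_def r labs)
  ultimately show ?thesis by (simp add: Phi_def)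
qed


section \<open>The automorphism psi\<close>

lemma perm_mat_rows: "p permutes (UNIV :: 4 set) \<Longrightarrow> perm_mat p = (\<chi> i. (mat 1 :: real^4^4) $ (Hilbert_Choice.inv p) i)"
proof -
  assume p: "p permutes (UNIV :: 4 set)"
  have "(i = p j) \<longleftrightarrow> (Hilbert_Choice.inv p i = j)" for i j
    using permutes_inverses[OF p] by metis
  then show ?thesis by (simp add: vec_eq_iff perm_mat_def mat_def)
qed

lemma det_DP: assumes v: "valid e p" shows "det (DP e p) = of_int (sign p)"
proof -
  have p: "p permutes (UNIV :: 4 set)" and pe: "(\<Prod>i\<in>UNIV. e i) = 1" using v by (auto simp: valid_def)
  have "det (diag_mat e) = (\<Prod>i\<in>UNIV. diag_mat e $ i $ i)"
    by (rule det_diagonal) (simp add: diag_mat_def)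
  also have "\<dots> = 1" using pe by (simp add: diag_mat_def)
  finally have d1: "det (diag_mat e) = 1" .
  have "det (perm_mat p) = of_int (sign (Hilbert_Choice.inv p)) * det (mat 1 :: real^4^4)"
    unfolding perm_mat_rows[OF p] by (rule det_permute_rows[OF permutes_inv[OF p]])
  also have "\<dots> = of_int (sign p)"
  proof -
    have "finite (UNIV::4 set) \<and> p permutes UNIV" using p by simp
    then have "permutation p" by (rule permutation_permutes[THEN iffD2, OF exI])
    then show ?thesis using sign_inverse[of p] by simp
  qed
  finally show ?thesis using d1 by (simp add: DP_def det_mul)
qed

lemma det_carrier: "x \<in> carrier W_D4 \<Longrightarrow> det x = 1 \<or> det x = -1"
proof -
  assume "x \<in> carrier W_D4"
  then obtain e p where "x = DP e p" "valid e p" by (auto simp: carrier_W)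
  then show ?thesis using det_DP by (cases p rule: sign_cases) auto
qed

lemma det_gm0: "det (gm 0) = -1"
proof -
  have "valid (\<lambda>_. 1) (Transposition.transpose 1 2)" by (simp add: valid_def permutes_swap_id)
  then show ?thesis using det_DP gm0 by (simp add: sign_swap_id)
qed

lemma MM_scale: "MM = (-1::real) *\<^sub>R mat 1"
proof -
  have "[0,1,2,3] ! pos j = pos j" for j :: 4 using four_cases[OF pos_lt[of j]] by auto
  moreover have "[-1,-1,-1,-1] ! pos j = (-1::int)" for j :: 4 using four_cases[OF pos_lt[of j]] by auto
  ultimately show ?thesis by (auto simp: vec_eq_iff dec_entry mat_def M_def MM_def)
qed

lemma neg_MM: "(-1::real) *\<^sub>R x = MM ** x"
proof -
  have "MM ** x = (-1::real) *\<^sub>R (mat 1 ** x)" unfolding MM_scale by (rule scalar_matrix_assoc[symmetric])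
  then show ?thesis by simp
qed

lemma det_MM: "det MM = 1"
proof -
  have "det MM = (\<Prod>i\<in>UNIV. MM $ i $ i)" by (rule det_diagonal) (simp add: MM_scale mat_def)
  then show ?thesis by (simp add: MM_scale mat_def)
qed

definition psi :: "real^4^4 \<Rightarrow> real^4^4" where "psi = (\<lambda>x\<in>carrier W_D4. det x *\<^sub>R x)"

lemma psi_val: assumes x: "x \<in> carrier W_D4" shows "psi x = (if det x = 1 then x else MM ** x)"
proof (cases "det x = 1")
  case True then show ?thesis using x by (simp add: psi_def)
next
  case False
  then have "det x = -1" using det_carrier[OF x] by simp
  then show ?thesis using x False by (simp add: psi_def neg_MM[symmetric])
qed

lemma psi_auto: "psi \<in> auto W_D4"
proof -
  have cl: "psi x \<in> carrier W_D4" if "x \<in> carrier W_D4" for x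
    using that psi_val W.m_closed[OF MM_carrier that] by simp
  have hom: "psi \<in> hom W_D4 W_D4"
  proof (rule homI)
    fix x assume "x \<in> carrier W_D4" then show "psi x \<in> carrier W_D4" using cl by simp
  next
    fix x y assume x: "x \<in> carrier W_D4" and y: "y \<in> carrier W_D4"
    have xy: "x ** y \<in> carrier W_D4" using W.m_closed[OF x y] by simp
    have "psi (x ** y) = (det x * det y) *\<^sub>R (x ** y)" using xy by (simp add: psi_def det_mul)
    also have "\<dots> = (det x *\<^sub>R x) ** (det y *\<^sub>R y)"
      by (simp add: matrix_scalar_ac scalar_matrix_assoc[symmetric] mult.commute)
    finally show "psi (x \<otimes>\<^bsub>W_D4\<^esub> y) = psi x \<otimes>\<^bsub>W_D4\<^esub> psi y" using x y by (simp add: psi_def)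
  qed
  have inv: "psi (psi x) = x" if x: "x \<in> carrier W_D4" for x
  proof (cases "det x = 1")
    case True then show ?thesis using x psi_val by simp
  next
    case False
    then have d: "det x = -1" using det_carrier[OF x] by simp
    have "det (MM ** x) = -1" using d det_MM by (simp add: det_mul)
    then show ?thesis using x psi_val[OF x] psi_val[OF W.m_closed[OF MM_carrier x, simplified]] False
      by (simp add: neg_MM[symmetric])
  qed
  have "bij_betw psi (carrier W_D4) (carrier W_D4)"
    by (rule bij_betw_byWitness[where f' = psi]) (use inv cl in auto)
  then show ?thesis using hom by (simp add: auto_def Bij_def psi_def)
qed

lemma Phi_psi: "Phi psi = (id, 1)"
proof -
  have l: "lab (psi x) = lab x" if x: "x \<in> Inv" "lab x < 3" for x
  proof -
    have "lab (MM ** x) = lab x" using neg_Inv[OF x(1)] x(2) by (simp add: negl_def)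
    then show ?thesis using psi_val[OF Inv_carrier[OF x(1)]] by simp
  qed
  have "phi1 psi n = id n" for n
  proof (cases "n \<in> {1,2,3}")
    case True
    have "rep (n - 1) \<in> Inv" "lab (rep (n - 1)) = n - 1" using rep_Inv lab_rep True by auto
    then show ?thesis using True l by (auto simp: phi1_def)
  qed (simp add: phi1_def)
  moreover have "phi2 psi = 1"
  proof -
    have "psi (rep 3) = MM ** gm 0" using psi_val gm_carrier det_gm0 by (simp add: rep_gm)
    moreover have "lab (MM ** gm 0) = 4" using neg_Inv gm_Inv[of 0] by (simp add: negl_def)
    ultimately show ?thesis by (simp add: phi2_def)
  qed
  ultimately show ?thesis by (simp add: Phi_def fun_eq_iff)
qed


(* ---- H.thy ---- *)


abbreviation t12 :: "nat \<Rightarrow> nat" where "t12 \<equiv> Transposition.transpose 1 2"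
abbreviation t23 :: "nat \<Rightarrow> nat" where "t23 \<equiv> Transposition.transpose 2 3"

lemma perm3_eq:
  assumes p: "p permutes {1..3::nat}" and q: "q permutes {1..3::nat}"
    and e: "p 1 = q 1" "p 2 = q 2" "p 3 = q 3"
  shows "p = q"
proof
  fix n
  show "p n = q n"
  proof (cases "n \<in> {1..3}")
    case True
    then have "n = 1 \<or> n = 2 \<or> n = 3" by auto
    then show ?thesis using e by auto
  next
    case False
    then show ?thesis using permutes_not_in[OF p False] permutes_not_in[OF q False] by simp
  qed
qed

lemma t_perm: "t12 permutes {1..3}" "t23 permutes {1..3}"
  by (auto intro: permutes_swap_id)

lemma tri_cases: "(x::nat) \<in> {1,2,3} \<Longrightarrow> y \<in> {1,2,3} \<Longrightarrow> z \<in> {1,2,3} \<Longrightarrow> x \<noteq> y \<Longrightarrow> x \<noteq> z \<Longrightarrow> y \<noteq> z \<Longrightarrow>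
  (x = 1 \<and> y = 2 \<and> z = 3) \<or> (x = 2 \<and> y = 1 \<and> z = 3) \<or> (x = 1 \<and> y = 3 \<and> z = 2) \<or>
  (x = 2 \<and> y = 3 \<and> z = 1) \<or> (x = 3 \<and> y = 1 \<and> z = 2) \<or> (x = 3 \<and> y = 2 \<and> z = 1)"
  by auto

lemma perm3:
  assumes p: "p permutes {1..3::nat}"
  shows "p = id \<or> p = t12 \<or> p = t23 \<or> p = t12 \<circ> t23 \<or> p = t23 \<circ> t12 \<or> p = t12 \<circ> t23 \<circ> t12"
proof -
  have r: "p n \<in> {1..3}" if "n \<in> {1..3}" for n using permutes_in_image[OF p] that by simp
  have a: "p 1 \<in> {1,2,3}" "p 2 \<in> {1,2,3}" "p 3 \<in> {1,2,3}" using r[of 1] r[of 2] r[of 3] by auto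
  have inj: "inj p" using permutes_inj[OF p] .
  have d: "p 1 \<noteq> p 2" "p 1 \<noteq> p 3" "p 2 \<noteq> p 3" by (simp_all add: inj_eq[OF inj])
  have P: "id permutes {1..3::nat}" "t12 permutes {1..3}" "t23 permutes {1..3}" "t12 \<circ> t23 permutes {1..3}"
    "t23 \<circ> t12 permutes {1..3}" "t12 \<circ> t23 \<circ> t12 permutes {1..3}"
    by (rule permutes_id, rule t_perm(1), rule t_perm(2), rule permutes_compose[OF t_perm(2) t_perm(1)],
        rule permutes_compose[OF t_perm(1) t_perm(2)], rule permutes_compose[OF t_perm(1) permutes_compose[OF t_perm(2) t_perm(1)]])
  have "(p 1 = 1 \<and> p 2 = 2 \<and> p 3 = 3) \<or> (p 1 = 2 \<and> p 2 = 1 \<and> p 3 = 3) \<or> (p 1 = 1 \<and> p 2 = 3 \<and> p 3 = 2) \<or>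
    (p 1 = 2 \<and> p 2 = 3 \<and> p 3 = 1) \<or> (p 1 = 3 \<and> p 2 = 1 \<and> p 3 = 2) \<or> (p 1 = 3 \<and> p 2 = 2 \<and> p 3 = 1)"
    by (rule tri_cases[OF a d])
  then show ?thesis
  proof (elim disjE conjE)
    assume "p 1 = 1" "p 2 = 2" "p 3 = 3"
    then have "p = id" using perm3_eq[OF p P(1)] by simp
    then show ?thesis by simp
  next
    assume "p 1 = 2" "p 2 = 1" "p 3 = 3"
    then have "p = t12" using perm3_eq[OF p P(2)] by (simp add: Transposition.transpose_def)
    then show ?thesis by simp
  next
    assume "p 1 = 1" "p 2 = 3" "p 3 = 2"
    then have "p = t23" using perm3_eq[OF p P(3)] by (simp add: Transposition.transpose_def)
    then show ?thesis by simp
  next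
    assume "p 1 = 2" "p 2 = 3" "p 3 = 1"
    then have "p = t12 \<circ> t23" using perm3_eq[OF p P(4)] by (simp add: Transposition.transpose_def)
    then show ?thesis by simp
  next
    assume "p 1 = 3" "p 2 = 1" "p 3 = 2"
    then have "p = t23 \<circ> t12" using perm3_eq[OF p P(5)] by (simp add: Transposition.transpose_def)
    then show ?thesis by simp
  next
    assume "p 1 = 3" "p 2 = 2" "p 3 = 1"
    then have "p = t12 \<circ> t23 \<circ> t12" using perm3_eq[OF p P(6)] by (simp add: Transposition.transpose_def)
    then show ?thesis by simp
  qed
qed

abbreviation DPG :: "((nat \<Rightarrow> nat) \<times> int) monoid" where
  "DPG \<equiv> DirProd (sym_group 3) (integer_mod_group 2)"

lemma Phi_mult: "a \<in> auto W_D4 \<Longrightarrow> b \<in> auto W_D4 \<Longrightarrow>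
    Phi (a \<otimes>\<^bsub>AutoGroup W_D4\<^esub> b) = (fst (Phi a) \<circ> fst (Phi b), (snd (Phi a) + snd (Phi b)) mod 2)"
  using Phi_hom by (simp add: hom_def AG_carrier mult_DirProd' sym_group_mult Z2_mult)

lemma Phi_one: "Phi (\<one>\<^bsub>AutoGroup W_D4\<^esub>) = (id, 0)"
proof -
  have "group_hom (AutoGroup W_D4) DPG Phi"
    by (simp add: group_hom_def group_hom_axioms_def Phi_hom W.AutoGroup DirProd_group sym_group_is_group)
  then show ?thesis using group_hom.hom_one by (fastforce simp: S3_one Z2_one)
qed

lemma Phi_surj: "Phi ` carrier (AutoGroup W_D4) = carrier DPG"
proof
  show "Phi ` carrier (AutoGroup W_D4) \<subseteq> carrier DPG"
  proof
    fix y assume "y \<in> Phi ` carrier (AutoGroup W_D4)"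
    then obtain x where "x \<in> carrier (AutoGroup W_D4)" "y = Phi x" by blast
    then show "y \<in> carrier DPG" using hom_in_carrier[OF Phi_hom] by blast
  qed
next
  let ?Im = "Phi ` auto W_D4"
  have cl: "(p \<circ> q, (b + c) mod 2) \<in> ?Im" if h1: "(p, b) \<in> ?Im" and h2: "(q, c) \<in> ?Im" for p q b c
  proof -
    obtain a1 where a1: "a1 \<in> auto W_D4" "Phi a1 = (p, b)" using h1 by auto
    obtain a2 where a2: "a2 \<in> auto W_D4" "Phi a2 = (q, c)" using h2 by auto
    have "a1 \<otimes>\<^bsub>AutoGroup W_D4\<^esub> a2 \<in> auto W_D4" using AG.m_closed a1(1) a2(1) by (simp add: AG_carrier)
    moreover have "Phi (a1 \<otimes>\<^bsub>AutoGroup W_D4\<^esub> a2) = (p \<circ> q, (b + c) mod 2)"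
      using Phi_mult[OF a1(1) a2(1)] a1(2) a2(2) by simp
    ultimately show ?thesis by (metis image_eqI)
  qed
  have e: "(id, 0) \<in> ?Im" using Phi_one AG.one_closed AG_carrier by (metis image_eqI)
  have g1: "(t12, 0) \<in> ?Im" using Phi_c14 c14_auto by (metis image_eqI)
  have g2: "(t23, 0) \<in> ?Im" using Phi_c34 c34_auto by (metis image_eqI)
  have g3: "(id, 1) \<in> ?Im" using Phi_psi psi_auto by (metis image_eqI)
  have s0: "(p, 0) \<in> ?Im" if "p permutes {1..3}" for p
  proof -
    have "(t12 \<circ> t23, 0) \<in> ?Im" using cl[OF g1 g2] by simp
    moreover have "(t23 \<circ> t12, 0) \<in> ?Im" using cl[OF g2 g1] by simp
    moreover have "(t12 \<circ> t23 \<circ> t12, 0) \<in> ?Im" using cl[OF cl[OF g1 g2] g1] by simp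
    ultimately show ?thesis using perm3[OF that] e g1 g2 by auto
  qed
  show "carrier DPG \<subseteq> Phi ` carrier (AutoGroup W_D4)"
  proof
    fix x assume "x \<in> carrier DPG"
    then obtain p b where x: "x = (p, b)" "p permutes {1..3}" "b \<in> {0, 1}"
      by (auto simp: sym_group_carrier Z2_carrier)
    have "(p, b) \<in> ?Im"
    proof (cases "b = 0")
      case True then show ?thesis using s0[OF x(2)] by simp
    next
      case False then have "b = 1" using x(3) by simp
      then show ?thesis using cl[OF s0[OF x(2)] g3] by simp
    qed
    then show "x \<in> Phi ` carrier (AutoGroup W_D4)" using x(1) by (simp add: AG_carrier)
  qed
qed

theorem corollary5p2:
  shows "AutoGroup W_D4 Mod Inn W_D4 \<cong> DirProd (sym_group 3) (integer_mod_group 2)"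
proof -
  have gh: "group_hom (AutoGroup W_D4) DPG Phi"
    by (simp add: group_hom_def group_hom_axioms_def Phi_hom W.AutoGroup DirProd_group sym_group_is_group)
  have "AutoGroup W_D4 Mod kernel (AutoGroup W_D4) DPG Phi \<cong> DPG"
    using group_hom.FactGroup_iso[OF gh Phi_surj] .
  then show ?thesis by (simp add: kernel_eq)
qed


end
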